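(* Let $k\ge 2$ and let $\vec a=(a_1,\dots,a_{|\vec a|})$, $\vec b=(b_1,\dots,b_{|\vec b|})$ be (possibly empty) lists of underlined slots carrying arbitrary spectral parameters, while the slots $1,\dots,k$ carry spectral parameter $0$. Then $$\mathcal Q^{(k)}_{1(\underline{\vec a},2,\dots,k-1,\underline{\vec b})}-\mathcal R^{-1}_{1\underline{\vec a}}\mathcal Q^{(k)}_{1(2,\dots,k-1,\underline{\vec b})}\mathcal R_{1\underline{\vec a}}=\mathcal Q^{(k)}_{1(\underline{\vec a},2,\dots,k-1)}-\mathcal R^{-1}_{1\underline{\vec a}}\mathcal Q^{(k)}_{1(2,\dots,k-1)}\mathcal R_{1\underline{\vec a}},$$ $$\tilde{\mathcal Q}^{(k)}_{(\underline{\vec a},1,\dots,k-1,\underline{\vec b})k}-\mathcal R^{-1}_{\underline{\vec b}k}\tilde{\mathcal Q}^{(k)}_{(\underline{\vec a},1,\dots,k-1)k}\mathcal R_{\underline{\vec b}k}=\tilde{\mathcal Q}^{(k)}_{(1,\dots,k-1,\underline{\vec b})k}-\mathcal R^{-1}_{\underline{\vec b}k}\tilde{\mathcal Q}^{(k)}_{(1,\dots,k-1)k}\mathcal R_{\underline{\vec b}k}.$$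
   Context: Let $V$ be a finite-dimensional complex vector space, $\mathcal P$ the flip on $V\otimes V$, and $\mathcal R(u,v)\in\mathrm{End}(V\otimes V)[[u,v]]$ analytic around $0$, satisfying the Yang–Baxter equation $\mathcal R_{12}(u_1,u_2)\mathcal R_{13}(u_1,u_3)\mathcal R_{23}(u_2,u_3)=\mathcal R_{23}(u_2,u_3)\mathcal R_{13}(u_1,u_3)\mathcal R_{12}(u_1,u_2)$, regularity $\mathcal R(u,u)=\mathcal P$ and unitarity $\mathcal R_{12}(u,v)\mathcal R_{21}(v,u)=1$. Subscripts denote tensor slots; each slot $i$ carries a spectral parameter $u_i$. For ordered lists of distinct slots $I=(i_1,\dots,i_N)$, $J=(j_1,\dots,j_M)$ put $\mathcal R_{IJ}:=\prod_{p=1}^{N}\big(\mathcal R_{i_pj_M}(u_{i_p},u_{j_M})\cdots\mathcal R_{i_pj_1}(u_{i_p},u_{j_1})\big)$, factors for $p=1,\dots,N$ multiplied left to right (e.g. $\mathcal R_{1(23)}=\mathcal R_{13}\mathcal R_{12}$, $\mathcal R_{(12)3}=\mathcal R_{13}\mathcal R_{23}$); lists written inside brackets are concatenated, and a one-element list is written without brackets. Let $D_I:=\sum_{i\in I}\partial/\partial u_i$. For $k\ge2$: $\mathcal Q^{(k)}_{IJ}:=D_I^{k-2}(\mathcal R_{IJ}^{-1}D_I\mathcal R_{IJ})$, $\tilde{\mathcal Q}^{(k)}_{IJ}:=-D_J^{k-2}(\mathcal R_{IJ}^{-1}D_J\mathcal R_{IJ})$. Underline convention: an underlined slot $\underline i$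 carries an arbitrary spectral parameter $u_i$; a non-underlined slot carries spectral parameter $0$. For a list $\vec a=(a_1,\dots,a_m)$, $\underline{\vec a}$ denotes the list of underlined slots $\underline a_1,\dots,\underline a_m$. *)

theory Defs
  imports "HOL-Analysis.Analysis"
begin

text \<open>V = C^n with basis indices 0..<n.  Tensor slots are labelled by natural numbers.
  For a finite slot set S, a basis vector of the tensor product over S is a configuration
  x :: nat => nat with x i < n for i in S and x i = 0 outside S.  Operators are matrices
  indexed by configurations.\<close>

type_synonym sop = "(nat \<Rightarrow> nat) \<Rightarrow> (nat \<Rightarrow> nat) \<Rightarrow> complex"

definition cfgs :: "nat set \<Rightarrow> nat \<Rightarrow> (nat \<Rightarrow> nat) set" where
  "cfgs S n = {x. (\<forall>i\<in>S. x i < n) \<and> (\<forall>i. i \<notin> S \<longrightarrow> x i = 0)}"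

definition op_eq :: "nat set \<Rightarrow> nat \<Rightarrow> sop \<Rightarrow> sop \<Rightarrow> bool" where
  "op_eq S n A B \<longleftrightarrow> (\<forall>x\<in>cfgs S n. \<forall>y\<in>cfgs S n. A x y = B x y)"

definition opmul :: "nat set \<Rightarrow> nat \<Rightarrow> sop \<Rightarrow> sop \<Rightarrow> sop" where
  "opmul S n A B = (\<lambda>x y. \<Sum>z\<in>cfgs S n. A x z * B z y)"

definition opid :: sop where
  "opid = (\<lambda>x y. if x = y then 1 else 0)"

definition opsub :: "sop \<Rightarrow> sop \<Rightarrow> sop" where
  "opsub A B = (\<lambda>x y. A x y - B x y)"

definition opneg :: "sop \<Rightarrow> sop" where
  "opneg A = (\<lambda>x y. - A x y)"

definition opinv :: "nat set \<Rightarrow> nat \<Rightarrow> sop \<Rightarrow> sop" where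
  "opinv S n A = (SOME B. op_eq S n (opmul S n A B) opid \<and> op_eq S n (opmul S n B A) opid)"

definition conjop :: "nat set \<Rightarrow> nat \<Rightarrow> sop \<Rightarrow> sop \<Rightarrow> sop" where
  "conjop S n A B = opmul S n (opmul S n (opinv S n A) B) A"

definition opprod :: "nat set \<Rightarrow> nat \<Rightarrow> sop list \<Rightarrow> sop" where
  "opprod S n As = foldr (opmul S n) As opid"

text \<open>R(u,v) is given by its matrix entries R u v (a,b) (c,e) = <e_a (x) e_b | R(u,v) | e_c (x) e_e>.
  R_{ij}(u_i,u_j) acting in slots i and j, identity elsewhere; u is the vector of
  spectral parameters of all slots.\<close>
definition Rop :: "(complex \<Rightarrow> complex \<Rightarrow> nat \<times> nat \<Rightarrow> nat \<times> nat \<Rightarrow> complex)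
    \<Rightarrow> nat \<Rightarrow> nat \<Rightarrow> (nat \<Rightarrow> complex) \<Rightarrow> sop" where
  "Rop R i j u = (\<lambda>x y. R (u i) (u j) (x i, x j) (y i, y j) *
      (if (\<forall>l. l \<noteq> i \<longrightarrow> l \<noteq> j \<longrightarrow> x l = y l) then 1 else 0))"

text \<open>R_{IJ} = prod_p (R_{i_p j_M} ... R_{i_p j_1}), p = 1..N left to right.\<close>
definition RIJ :: "(complex \<Rightarrow> complex \<Rightarrow> nat \<times> nat \<Rightarrow> nat \<times> nat \<Rightarrow> complex)
    \<Rightarrow> nat set \<Rightarrow> nat \<Rightarrow> nat list \<Rightarrow> nat list \<Rightarrow> (nat \<Rightarrow> complex) \<Rightarrow> sop" where
  "RIJ R S n I J u = opprod S n (map (\<lambda>i. opprod S n (map (\<lambda>j. Rop R i j u) (rev J))) I)"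

text \<open>Shift of the spectral parameters of the slots in I by t; D_I is the derivative along it.\<close>
definition shift :: "(nat \<Rightarrow> complex) \<Rightarrow> nat list \<Rightarrow> complex \<Rightarrow> (nat \<Rightarrow> complex)" where
  "shift u I t = (\<lambda>i. if i \<in> set I then u i + t else u i)"

definition DD :: "nat list \<Rightarrow> nat \<Rightarrow> ((nat \<Rightarrow> complex) \<Rightarrow> sop) \<Rightarrow> (nat \<Rightarrow> complex) \<Rightarrow> sop" where
  "DD I m F u = (\<lambda>x y. (deriv ^^ m) (\<lambda>t. F (shift u I t) x y) 0)"

definition Qk :: "(complex \<Rightarrow> complex \<Rightarrow> nat \<times> nat \<Rightarrow> nat \<times> nat \<Rightarrow> complex)
    \<Rightarrow> nat set \<Rightarrow> nat \<Rightarrow> nat \<Rightarrow> nat list \<Rightarrow> nat list \<Rightarrow> (nat \<Rightarrow> complex) \<Rightarrow> sop" where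
  "Qk R S n k I J u = DD I (k - 2)
     (\<lambda>w. opmul S n (opinv S n (RIJ R S n I J w)) (DD I 1 (RIJ R S n I J) w)) u"

definition Qtk :: "(complex \<Rightarrow> complex \<Rightarrow> nat \<times> nat \<Rightarrow> nat \<times> nat \<Rightarrow> complex)
    \<Rightarrow> nat set \<Rightarrow> nat \<Rightarrow> nat \<Rightarrow> nat list \<Rightarrow> nat list \<Rightarrow> (nat \<Rightarrow> complex) \<Rightarrow> sop" where
  "Qtk R S n k I J u = opneg (DD J (k - 2)
     (\<lambda>w. opmul S n (opinv S n (RIJ R S n I J w)) (DD J 1 (RIJ R S n I J) w)) u)"

definition analytic_R :: "nat \<Rightarrow> real \<Rightarrow> (complex \<Rightarrow> complex \<Rightarrow> nat \<times> nat \<Rightarrow> nat \<times> nat \<Rightarrow> complex) \<Rightarrow> bool" where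
  "analytic_R n r R \<longleftrightarrow> 0 < r \<and>
     (\<forall>p q. fst p < n \<longrightarrow> snd p < n \<longrightarrow> fst q < n \<longrightarrow> snd q < n \<longrightarrow>
        (\<exists>c :: nat \<times> nat \<Rightarrow> complex. \<forall>u v. norm u < r \<longrightarrow> norm v < r \<longrightarrow>
            ((\<lambda>(i, j). c (i, j) * u ^ i * v ^ j) has_sum R u v p q) UNIV))"

end

theory Submission
  imports Defs "HOL-Complex_Analysis.Complex_Analysis" "HOL-Library.Function_Algebras"
begin


lemma finite_cfgs: "finite S \<Longrightarrow> finite (cfgs S n)"
proof -
  assume fS: "finite S"
  have "cfgs S n \<subseteq> {f. \<forall>x. (x \<in> S \<longrightarrow> f x \<in> {..<n}) \<and> (x \<notin> S \<longrightarrow> f x = 0)}"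
    by (auto simp: cfgs_def)
  then show ?thesis using finite_set_of_finite_funs[OF fS, of "{..<n}" 0]
    by (meson finite_lessThan finite_subset)
qed

locale ops =
  fixes S :: "nat set" and n :: nat
  assumes finS: "finite S" and npos: "0 < n"
begin

abbreviation "C \<equiv> cfgs S n"

definition nz :: "sop \<Rightarrow> sop" where
  "nz A = (\<lambda>x y. if x \<in> C \<and> y \<in> C then A x y else 0)"

definition mm :: "sop \<Rightarrow> sop \<Rightarrow> sop" where
  "mm A B = nz (opmul S n A B)"

definition II :: sop where "II = nz opid"

definition sc :: "complex \<Rightarrow> sop \<Rightarrow> sop" where
  "sc c A = (\<lambda>x y. c * A x y)"

lemma finC: "finite C" using finite_cfgs[OF finS] .

lemma op_eq_nz: "op_eq S n A B \<longleftrightarrow> nz A = nz B"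
  unfolding op_eq_def nz_def by (auto simp: fun_eq_iff)

lemma nz_nz[simp]: "nz (nz A) = nz A"
  by (auto simp: nz_def fun_eq_iff)

lemma mm_nz_left[simp]: "mm (nz A) B = mm A B"
  unfolding mm_def nz_def opmul_def by (intro ext) (simp cong: sum.cong)

lemma mm_nz_right[simp]: "mm A (nz B) = mm A B"
  unfolding mm_def nz_def opmul_def by (intro ext) (simp cong: sum.cong)

lemma nz_mm[simp]: "nz (mm A B) = mm A B"
  unfolding mm_def by simp

lemma opmul_assoc: "opmul S n (opmul S n A B) D x y = opmul S n A (opmul S n B D) x y"
proof -
  have "opmul S n (opmul S n A B) D x y = (\<Sum>z\<in>C. \<Sum>w\<in>C. A x w * B w z * D z y)"
    unfolding opmul_def by (simp add: sum_distrib_right)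
  also have "\<dots> = (\<Sum>w\<in>C. \<Sum>z\<in>C. A x w * B w z * D z y)"
    by (rule sum.swap)
  also have "\<dots> = opmul S n A (opmul S n B D) x y"
    unfolding opmul_def by (simp add: sum_distrib_left mult.assoc)
  finally show ?thesis .
qed

lemma mm_assoc: "mm (mm A B) D = mm A (mm B D)"
proof -
  have "mm (mm A B) D = nz (opmul S n (opmul S n A B) D)"
    unfolding mm_def by (metis mm_def mm_nz_left)
  moreover have "mm A (mm B D) = nz (opmul S n A (opmul S n B D))"
    unfolding mm_def by (metis mm_def mm_nz_right)
  ultimately show ?thesis by (simp add: opmul_assoc[abs_def])
qed

lemma opmul_opid_left: "x \<in> C \<Longrightarrow> opmul S n opid A x y = A x y"
proof -
  assume x: "x \<in> C"
  have "opmul S n opid A x y = (\<Sum>z\<in>C. if z = x then A z y else 0)"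
    unfolding opmul_def opid_def by (rule sum.cong) auto
  also have "\<dots> = A x y" using x finC by (simp add: sum.delta)
  finally show ?thesis .
qed

lemma opmul_opid_right: "y \<in> C \<Longrightarrow> opmul S n A opid x y = A x y"
proof -
  assume y: "y \<in> C"
  have "opmul S n A opid x y = (\<Sum>z\<in>C. if z = y then A x z else 0)"
    unfolding opmul_def opid_def by (rule sum.cong) auto
  also have "\<dots> = A x y" using y finC by (simp add: sum.delta)
  finally show ?thesis .
qed

lemma mm_opid_left[simp]: "mm opid A = nz A"
  unfolding mm_def nz_def by (intro ext) (simp add: opmul_opid_left)

lemma mm_opid_right[simp]: "mm A opid = nz A"
  unfolding mm_def nz_def by (intro ext) (simp add: opmul_opid_right)

lemma mm_II_left[simp]: "mm II A = nz A" unfolding II_def by simp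
lemma mm_II_right[simp]: "mm A II = nz A" unfolding II_def by simp

lemma nz_add[simp]: "nz (A + B) = nz A + nz B"
  by (auto simp: nz_def fun_eq_iff)
lemma nz_diff[simp]: "nz (A - B) = nz A - nz B"
  by (auto simp: nz_def fun_eq_iff)
lemma nz_zero[simp]: "nz 0 = 0"
  by (auto simp: nz_def fun_eq_iff)
lemma nz_sc[simp]: "nz (sc c A) = sc c (nz A)"
  by (auto simp: nz_def sc_def fun_eq_iff)
lemma nz_uminus[simp]: "nz (- A) = - nz A"
  by (auto simp: nz_def fun_eq_iff)

lemma mm_add_left: "mm (A + B) D = mm A D + mm B D"
  unfolding mm_def opmul_def nz_def by (auto simp: fun_eq_iff distrib_right sum.distrib)
lemma mm_add_right: "mm A (B + D) = mm A B + mm A D"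
  unfolding mm_def opmul_def nz_def by (auto simp: fun_eq_iff distrib_left sum.distrib)
lemma mm_diff_left: "mm (A - B) D = mm A D - mm B D"
  unfolding mm_def opmul_def nz_def by (auto simp: fun_eq_iff left_diff_distrib sum_subtractf)
lemma mm_diff_right: "mm A (B - D) = mm A B - mm A D"
  unfolding mm_def opmul_def nz_def by (auto simp: fun_eq_iff right_diff_distrib sum_subtractf)
lemma mm_zero_left[simp]: "mm 0 D = 0"
  unfolding mm_def opmul_def nz_def by (auto simp: fun_eq_iff)
lemma mm_zero_right[simp]: "mm D 0 = 0"
  unfolding mm_def opmul_def nz_def by (auto simp: fun_eq_iff)
lemma mm_sc_left: "mm (sc c A) D = sc c (mm A D)"
  unfolding mm_def opmul_def nz_def sc_def by (auto simp: fun_eq_iff sum_distrib_left mult.assoc)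
lemma mm_sc_right: "mm D (sc c A) = sc c (mm D A)"
  unfolding mm_def opmul_def nz_def sc_def by (auto simp: fun_eq_iff sum_distrib_left mult.assoc mult.left_commute)

lemma opmul_mm: "nz (opmul S n A B) = mm A B" unfolding mm_def ..

end


definition zT :: "nat set \<Rightarrow> (nat \<Rightarrow> nat) \<Rightarrow> (nat \<Rightarrow> nat)" where
  "zT T x = (\<lambda>i. if i \<in> T then 0 else x i)"

definition sw :: "nat \<Rightarrow> nat \<Rightarrow> (nat \<Rightarrow> nat) \<Rightarrow> (nat \<Rightarrow> nat)" where
  "sw s j x = (\<lambda>i. if i = s then x j else if i = j then x s else x i)"

definition Psw :: "nat \<Rightarrow> nat \<Rightarrow> sop" where
  "Psw s j = (\<lambda>x y. if y = sw s j x then 1 else 0)"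

lemma sw_sw[simp]: "sw s j (sw s j x) = x"
  by (auto simp: sw_def fun_eq_iff)

context ops
begin

definition avoids :: "nat set \<Rightarrow> sop \<Rightarrow> bool" where
  "avoids T A \<longleftrightarrow> (\<forall>x\<in>C. \<forall>y\<in>C. A x y = (if (\<forall>i\<in>T. x i = y i) then A (zT T x) (zT T y) else 0))"

lemma zT_in: "x \<in> C \<Longrightarrow> zT T x \<in> C"
  using npos by (auto simp: cfgs_def zT_def)

lemma sw_in: "x \<in> C \<Longrightarrow> s \<in> S \<Longrightarrow> j \<in> S \<Longrightarrow> sw s j x \<in> C"
  by (auto simp: cfgs_def sw_def)

lemma zT_zT: "T' \<subseteq> T \<Longrightarrow> zT T (zT T' x) = zT T x"
  by (auto simp: zT_def fun_eq_iff)

lemma avoids_nz[simp]: "avoids T (nz A) \<longleftrightarrow> avoids T A"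
  unfolding avoids_def nz_def using zT_in by auto

lemma avoidsD: "avoids T A \<Longrightarrow> x \<in> C \<Longrightarrow> y \<in> C \<Longrightarrow>
   A x y = (if (\<forall>i\<in>T. x i = y i) then A (zT T x) (zT T y) else 0)"
  unfolding avoids_def by blast

lemma avoids_add: "avoids T A \<Longrightarrow> avoids T B \<Longrightarrow> avoids T (A + B)"
  unfolding avoids_def by (auto simp: plus_fun_def)
lemma avoids_diff: "avoids T A \<Longrightarrow> avoids T B \<Longrightarrow> avoids T (A - B)"
  unfolding avoids_def by (auto simp: fun_diff_def)
lemma avoids_uminus: "avoids T A \<Longrightarrow> avoids T (- A)"
  unfolding avoids_def by (auto simp: fun_Compl_def)
lemma avoids_zero: "avoids T 0"
  unfolding avoids_def by auto
lemma avoids_sc: "avoids T A \<Longrightarrow> avoids T (sc c A)"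
  unfolding avoids_def sc_def by auto

lemma avoids_mono: assumes "T' \<subseteq> T" "avoids T A" shows "avoids T' A"
  unfolding avoids_def
proof (intro ballI)
  fix x y assume x: "x \<in> C" and y: "y \<in> C"
  show "A x y = (if \<forall>i\<in>T'. x i = y i then A (zT T' x) (zT T' y) else 0)"
  proof (cases "\<forall>i\<in>T'. x i = y i")
    case True
    have 1: "A x y = (if (\<forall>i\<in>T. x i = y i) then A (zT T x) (zT T y) else 0)"
      using avoidsD[OF assms(2) x y] .
    have 2: "A (zT T' x) (zT T' y) = (if (\<forall>i\<in>T. zT T' x i = zT T' y i) then A (zT T (zT T' x)) (zT T (zT T' y)) else 0)"
      using avoidsD[OF assms(2) zT_in[OF x] zT_in[OF y]] .
    have 3: "(\<forall>i\<in>T. zT T' x i = zT T' y i) \<longleftrightarrow> (\<forall>i\<in>T. x i = y i)"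
      using True by (auto simp: zT_def)
    show ?thesis using True 1 2 3 zT_zT[OF assms(1)] by simp
  next
    case False
    then show ?thesis using avoidsD[OF assms(2) x y] assms(1) by auto
  qed
qed

lemma avoids_II: "avoids T II"
  unfolding avoids_def II_def nz_def opid_def using zT_in
  by (auto simp: zT_def fun_eq_iff)

lemma sum_single_C:
  assumes "m \<in> C" "\<And>z. z \<in> C \<Longrightarrow> z \<noteq> m \<Longrightarrow> f z = 0"
  shows "(\<Sum>z\<in>C. f z) = f m"
proof -
  have "(\<Sum>z\<in>C. f z) = f m + (\<Sum>z\<in>C - {m}. f z)"
    using assms(1) finC by (simp add: sum.remove)
  also have "(\<Sum>z\<in>C - {m}. f z) = 0" using assms(2) by (intro sum.neutral) auto
  finally show ?thesis by simp
qed

lemma avoids_mm: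
  assumes A: "avoids T A" and B: "avoids T B"
  shows "avoids T (mm A B)"
  unfolding avoids_def
proof (intro ballI)
  fix x y assume x: "x \<in> C" and y: "y \<in> C"
  show "mm A B x y = (if \<forall>i\<in>T. x i = y i then mm A B (zT T x) (zT T y) else 0)"
  proof (cases "\<forall>i\<in>T. x i = y i")
    case False
    have "A x z * B z y = 0" if z: "z \<in> C" for z
    proof -
      have "A x z = 0 \<or> B z y = 0"
        using avoidsD[OF A x z] avoidsD[OF B z y] False by auto
      then show ?thesis by auto
    qed
    then have "opmul S n A B x y = 0" unfolding opmul_def by (simp add: sum.neutral)
    then show ?thesis using False x y by (auto simp: mm_def nz_def)
  next
    case True
    define x' where "x' = zT T x"
    define y' where "y' = zT T y"
    have x': "x' \<in> C" and y': "y' \<in> C" using zT_in x y by (auto simp: x'_def y'_def)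
    define h where "h = (\<lambda>z. (\<lambda>i. if i \<in> T then x' i else z i))"
    define g where "g = (\<lambda>z. (\<lambda>i. if i \<in> T then x i else z i))"
    let ?P = "\<lambda>w z. \<forall>i\<in>T. w i = z i"
    have zx: "A x z = 0" if "z \<in> C" "\<not> ?P x z" for z using avoidsD[OF A x that(1)] that(2) by simp
    have zx': "A x' z = 0" if "z \<in> C" "\<not> ?P x' z" for z using avoidsD[OF A x' that(1)] that(2) by simp
    have "opmul S n A B x y = (\<Sum>z\<in>{z\<in>C. ?P x z}. A x z * B z y)"
      unfolding opmul_def using finC
      by (intro sum.mono_neutral_right) (auto simp: zx)
    also have "\<dots> = (\<Sum>z\<in>{z\<in>C. ?P x' z}. A x' z * B z y')"
    proof (rule sum.reindex_bij_witness[where i = g and j = h])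
      fix z assume z: "z \<in> {z\<in>C. ?P x' z}"
      show "g z \<in> {z \<in> C. ?P x z}" using z x by (auto simp: g_def cfgs_def)
      show "h (g z) = z" using z by (auto simp: g_def h_def fun_eq_iff)
    next
      fix z assume z: "z \<in> {z\<in>C. ?P x z}"
      show "h z \<in> {z \<in> C. ?P x' z}" using z x' by (auto simp: h_def cfgs_def)
      show "g (h z) = z" using z by (auto simp: g_def h_def fun_eq_iff)
      have hz: "h z \<in> C" using z x' by (auto simp: h_def cfgs_def)
      have e1: "zT T (h z) = zT T z" by (auto simp: h_def zT_def fun_eq_iff)
      have e2: "zT T x' = zT T x" by (auto simp: x'_def zT_def fun_eq_iff)
      have e3: "zT T y' = zT T y" by (auto simp: y'_def zT_def fun_eq_iff)
      have a1: "A x' (h z) = A x z"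
        using avoidsD[OF A x' hz] avoidsD[OF A x] z e1 e2 by (auto simp: h_def)
      have b1: "B (h z) y' = B z y"
      proof -
        have "?P z y" using z True by auto
        moreover have "?P (h z) y'" by (auto simp: h_def x'_def y'_def zT_def)
        ultimately show ?thesis using avoidsD[OF B hz y'] avoidsD[OF B _ y] z e1 e3 by auto
      qed
      show "A x' (h z) * B (h z) y' = A x z * B z y" using a1 b1 by simp
    qed
    also have "\<dots> = opmul S n A B x' y'"
      unfolding opmul_def using finC
      by (intro sum.mono_neutral_left) (auto simp: zx')
    finally show ?thesis using True x y x' y' by (simp add: mm_def nz_def x'_def y'_def)
  qed
qed

lemma avoids_commute:
  assumes A: "avoids T A" and B: "avoids (S - T) B"
  shows "mm A B = mm B A"
proof (intro ext)
  fix x y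
  show "mm A B x y = mm B A x y"
  proof (cases "x \<in> C \<and> y \<in> C")
    case False then show ?thesis by (auto simp: mm_def nz_def)
  next
    case True
    then have x: "x \<in> C" and y: "y \<in> C" by auto
    define m where "m = (\<lambda>i. if i \<in> T then x i else y i)"
    define m' where "m' = (\<lambda>i. if i \<in> T then y i else x i)"
    have m: "m \<in> C" and m': "m' \<in> C" using x y by (auto simp: m_def m'_def cfgs_def)
    have xo: "\<And>i. i \<notin> S \<Longrightarrow> x i = 0" and yo: "\<And>i. i \<notin> S \<Longrightarrow> y i = 0"
      using x y by (auto simp: cfgs_def)
    have s1: "opmul S n A B x y = A x m * B m y"
      unfolding opmul_def
    proof (rule sum_single_C[OF m])
      fix z assume z: "z \<in> C" "z \<noteq> m"
      then obtain i where "z i \<noteq> m i" by auto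
      then have "(i \<in> T \<and> x i \<noteq> z i) \<or> (i \<in> S - T \<and> z i \<noteq> y i)"
        using z(1) xo yo by (cases "i \<in> S") (auto simp: m_def cfgs_def split: if_splits)
      then show "A x z * B z y = 0"
        using avoidsD[OF A x z(1)] avoidsD[OF B z(1) y] by auto
    qed
    have s2: "opmul S n B A x y = B x m' * A m' y"
      unfolding opmul_def
    proof (rule sum_single_C[OF m'])
      fix z assume z: "z \<in> C" "z \<noteq> m'"
      then obtain i where "z i \<noteq> m' i" by auto
      then have "(i \<in> S - T \<and> x i \<noteq> z i) \<or> (i \<in> T \<and> z i \<noteq> y i)"
        using z(1) xo yo by (cases "i \<in> S") (auto simp: m'_def cfgs_def split: if_splits)
      then show "B x z * A z y = 0"
        using avoidsD[OF B x z(1)] avoidsD[OF A z(1) y] by auto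
    qed
    have "A x m = A (zT T x) (zT T y)"
      using avoidsD[OF A x m] by (simp add: m_def zT_def fun_eq_iff cong: if_cong)
    moreover have "A m' y = A (zT T x) (zT T y)"
      using avoidsD[OF A m' y] by (simp add: m'_def zT_def fun_eq_iff cong: if_cong)
    moreover have "B m y = B (zT (S - T) x) (zT (S - T) y)"
    proof -
      have "zT (S - T) m = zT (S - T) x" using xo yo by (auto simp: m_def zT_def fun_eq_iff)
      then show ?thesis using avoidsD[OF B m y] by (simp add: m_def)
    qed
    moreover have "B x m' = B (zT (S - T) x) (zT (S - T) y)"
    proof -
      have "zT (S - T) m' = zT (S - T) y" using xo yo by (auto simp: m'_def zT_def fun_eq_iff)
      then show ?thesis using avoidsD[OF B x m'] by (simp add: m'_def)
    qed
    ultimately show ?thesis using s1 s2 x y by (simp add: mm_def nz_def)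
  qed
qed

lemma mm_Psw:
  assumes s: "s \<in> S" and j: "j \<in> S"
  shows "mm (mm (Psw s j) X) (Psw s j) = nz (\<lambda>x y. X (sw s j x) (sw s j y))"
proof (intro ext)
  fix x y
  show "mm (mm (Psw s j) X) (Psw s j) x y = nz (\<lambda>x y. X (sw s j x) (sw s j y)) x y"
  proof (cases "x \<in> C \<and> y \<in> C")
    case False then show ?thesis by (auto simp: mm_def nz_def)
  next
    case True
    then have x: "x \<in> C" and y: "y \<in> C" by auto
    have 1: "mm (Psw s j) X x w = X (sw s j x) w" if w: "w \<in> C" for w
    proof -
      have "opmul S n (Psw s j) X x w = (\<Sum>z\<in>C. if z = sw s j x then X z w else 0)"
        unfolding opmul_def Psw_def by (rule sum.cong) auto
      also have "\<dots> = X (sw s j x) w" using sw_in[OF x s j] finC by (simp add: sum.delta)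
      finally show ?thesis using x w by (simp add: mm_def nz_def)
    qed
    have "opmul S n (mm (Psw s j) X) (Psw s j) x y = (\<Sum>w\<in>C. if w = sw s j y then X (sw s j x) w else 0)"
      unfolding opmul_def
    proof (rule sum.cong)
      fix w assume w: "w \<in> C"
      have "(y = sw s j w) \<longleftrightarrow> (w = sw s j y)" by auto
      then show "mm (Psw s j) X x w * Psw s j w y = (if w = sw s j y then X (sw s j x) w else 0)"
        using 1[OF w] by (simp add: Psw_def)
    qed simp
    also have "\<dots> = X (sw s j x) (sw s j y)" using sw_in[OF y s j] finC by (simp add: sum.delta)
    finally show ?thesis using x y by (simp add: mm_def nz_def)
  qed
qed

lemma avoids_swap:
  assumes s: "s \<in> S" and j: "j \<in> S" and sj: "s \<noteq> j" and sT: "s \<notin> T" and jT: "j \<notin> T"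
    and X: "avoids (insert j T) X"
  shows "avoids (insert s T) (nz (\<lambda>x y. X (sw s j x) (sw s j y)))"
  unfolding avoids_nz
  unfolding avoids_def
proof (intro ballI)
  fix x y assume x: "x \<in> C" and y: "y \<in> C"
  have e: "(\<forall>i\<in>insert j T. sw s j x i = sw s j y i) \<longleftrightarrow> (\<forall>i\<in>insert s T. x i = y i)"
    using sT jT sj by (auto simp: sw_def)
  have z: "zT (insert j T) (sw s j w) = sw s j (zT (insert s T) w)" for w
    using sT jT sj by (auto simp: sw_def zT_def fun_eq_iff)
  show "X (sw s j x) (sw s j y) =
    (if \<forall>i\<in>insert s T. x i = y i then X (sw s j (zT (insert s T) x)) (sw s j (zT (insert s T) y)) else 0)"
    using avoidsD[OF X sw_in[OF x s j] sw_in[OF y s j]] e z by simp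
qed

end


lemma higher_deriv_sum:
  fixes f :: "'a \<Rightarrow> complex \<Rightarrow> complex"
  assumes "finite A" "\<And>a. a \<in> A \<Longrightarrow> f a holomorphic_on U" "open U" "z \<in> U"
  shows "(deriv ^^ m) (\<lambda>t. \<Sum>a\<in>A. f a t) z = (\<Sum>a\<in>A. (deriv ^^ m) (f a) z)"
  using assms(1,2)
proof (induction A rule: finite_induct)
  case empty
  then show ?case by simp
next
  case (insert a A)
  have "(deriv ^^ m) (\<lambda>t. \<Sum>a\<in>insert a A. f a t) z = (deriv ^^ m) (\<lambda>t. f a t + (\<Sum>a\<in>A. f a t)) z"
    using insert by simp
  also have "\<dots> = (deriv ^^ m) (f a) z + (deriv ^^ m) (\<lambda>t. \<Sum>a\<in>A. f a t) z"
    using insert assms(3,4)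
    by (intro higher_deriv_add) (auto intro!: holomorphic_intros)
  finally show ?case using insert by simp
qed

lemma sum_fun_apply2: "(sum f A) x y = (\<Sum>a\<in>A. f a x y)"
  by (induction A rule: infinite_finite_induct) auto

locale ana = ops +
  fixes U :: "complex set"
  assumes openU: "open U" and U0: "0 \<in> U"
begin

definition hol :: "(complex \<Rightarrow> sop) \<Rightarrow> bool" where
  "hol F \<longleftrightarrow> (\<forall>x\<in>C. \<forall>y\<in>C. (\<lambda>t. F t x y) holomorphic_on U)"

definition dn :: "nat \<Rightarrow> (complex \<Rightarrow> sop) \<Rightarrow> sop" where
  "dn m F = nz (\<lambda>x y. (deriv ^^ m) (\<lambda>t. F t x y) 0)"

definition lm :: "(complex \<Rightarrow> sop) \<Rightarrow> (complex \<Rightarrow> sop) \<Rightarrow> complex \<Rightarrow> sop" where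
  "lm F G = (\<lambda>t. mm (F t) (G t))"

definition dv :: "(complex \<Rightarrow> sop) \<Rightarrow> complex \<Rightarrow> sop" where
  "dv F = (\<lambda>t x y. deriv (\<lambda>s. F s x y) t)"

definition van :: "nat \<Rightarrow> (complex \<Rightarrow> sop) \<Rightarrow> bool" where
  "van m F \<longleftrightarrow> (\<forall>i<m. dn i F = 0)"

lemma mm_apply: "x \<in> C \<Longrightarrow> y \<in> C \<Longrightarrow> mm A B x y = (\<Sum>z\<in>C. A x z * B z y)"
  by (simp add: mm_def nz_def opmul_def)

lemma holD: "hol F \<Longrightarrow> x \<in> C \<Longrightarrow> y \<in> C \<Longrightarrow> (\<lambda>t. F t x y) holomorphic_on U"
  unfolding hol_def by blast

lemma hol_lm: assumes "hol F" "hol G" shows "hol (lm F G)"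
  unfolding hol_def
proof (intro ballI)
  fix x y assume x: "x \<in> C" and y: "y \<in> C"
  have "(\<lambda>t. lm F G t x y) = (\<lambda>t. \<Sum>z\<in>C. F t x z * G t z y)"
    using x y by (simp add: lm_def mm_apply)
  moreover have "(\<lambda>t. \<Sum>z\<in>C. F t x z * G t z y) holomorphic_on U"
    using holD[OF assms(1) x] holD[OF assms(2) _ y] by (intro holomorphic_intros) auto
  ultimately show "(\<lambda>t. lm F G t x y) holomorphic_on U" by simp
qed

lemma hol_mm: "hol F \<Longrightarrow> hol G \<Longrightarrow> hol (\<lambda>t. mm (F t) (G t))"
  using hol_lm unfolding lm_def by simp

lemma hol_add: "hol F \<Longrightarrow> hol G \<Longrightarrow> hol (\<lambda>t. F t + G t)"
  unfolding hol_def by (auto intro!: holomorphic_intros)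
lemma hol_diff: "hol F \<Longrightarrow> hol G \<Longrightarrow> hol (\<lambda>t. F t - G t)"
  unfolding hol_def by (auto intro!: holomorphic_intros)
lemma hol_const: "hol (\<lambda>t. A)"
  unfolding hol_def by (auto intro!: holomorphic_intros)
lemma hol_nz: "hol F \<Longrightarrow> hol (\<lambda>t. nz (F t))"
  unfolding hol_def nz_def by auto
lemma hol_sc: "f holomorphic_on U \<Longrightarrow> hol (\<lambda>t. sc (f t) A)"
  unfolding hol_def sc_def by (auto intro!: holomorphic_intros)
lemma hol_dv: "hol F \<Longrightarrow> hol (dv F)"
  unfolding hol_def dv_def using openU by (auto intro!: holomorphic_intros)

lemma hol_cong: assumes "\<And>t. t \<in> U \<Longrightarrow> nz (F t) = nz (G t)" "hol F" shows "hol G"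
  unfolding hol_def
proof (intro ballI)
  fix x y assume x: "x \<in> C" and y: "y \<in> C"
  have "\<And>t. t \<in> U \<Longrightarrow> F t x y = G t x y"
    using assms(1) x y unfolding nz_def by (metis (no_types, lifting))
  then show "(\<lambda>t. G t x y) holomorphic_on U"
    using holD[OF assms(2) x y] by (metis holomorphic_cong)
qed

lemma dn_cong: assumes "\<And>t. t \<in> U \<Longrightarrow> nz (F t) = nz (G t)" shows "dn m F = dn m G"
  unfolding dn_def nz_def
proof (intro ext)
  fix x y
  show "(if x \<in> C \<and> y \<in> C then (deriv ^^ m) (\<lambda>t. F t x y) 0 else 0) =
        (if x \<in> C \<and> y \<in> C then (deriv ^^ m) (\<lambda>t. G t x y) 0 else 0)"
  proof (cases "x \<in> C \<and> y \<in> C")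
    case True
    have "\<And>t. t \<in> U \<Longrightarrow> F t x y = G t x y"
      using assms(1) True unfolding nz_def by (metis (no_types, lifting))
    then have "eventually (\<lambda>t. F t x y = G t x y) (nhds 0)"
      using eventually_nhds_in_open[OF openU U0] by (auto elim: eventually_mono)
    then show ?thesis using True by (simp add: higher_deriv_cong_ev)
  qed auto
qed

lemma dv_cong: assumes "\<And>t. t \<in> U \<Longrightarrow> nz (F t) = nz (G t)" "s \<in> U"
  shows "nz (dv F s) = nz (dv G s)"
  unfolding dv_def nz_def
proof (intro ext)
  fix x y
  show "(if x \<in> C \<and> y \<in> C then deriv (\<lambda>t. F t x y) s else 0) =
        (if x \<in> C \<and> y \<in> C then deriv (\<lambda>t. G t x y) s else 0)"
  proof (cases "x \<in> C \<and> y \<in> C")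
    case True
    have "\<And>t. t \<in> U \<Longrightarrow> F t x y = G t x y"
      using assms(1) True unfolding nz_def by (metis (no_types, lifting))
    then have "eventually (\<lambda>t. F t x y = G t x y) (nhds s)"
      using eventually_nhds_in_open[OF openU assms(2)] by (auto elim: eventually_mono)
    then show ?thesis using True by (simp add: deriv_cong_ev)
  qed auto
qed

lemma dn_nz[simp]: "dn m (\<lambda>t. nz (F t)) = dn m F"
  by (rule dn_cong) simp

lemma nz_dn[simp]: "nz (dn m F) = dn m F"
  unfolding dn_def by simp

lemma dn_0: "dn 0 F = nz (F 0)"
  unfolding dn_def nz_def by (simp add: fun_eq_iff)

lemma dn_add: assumes "hol F" "hol G" shows "dn m (\<lambda>t. F t + G t) = dn m F + dn m G"
proof (intro ext)
  fix x y show "dn m (\<lambda>t. F t + G t) x y = (dn m F + dn m G) x y"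
  proof (cases "x \<in> C \<and> y \<in> C")
    case True then show ?thesis
      using higher_deriv_add[OF holD[OF assms(1)] holD[OF assms(2)] openU U0] by (simp add: dn_def nz_def)
  qed (auto simp: dn_def nz_def)
qed

lemma dn_diff: assumes "hol F" "hol G" shows "dn m (\<lambda>t. F t - G t) = dn m F - dn m G"
proof (intro ext)
  fix x y show "dn m (\<lambda>t. F t - G t) x y = (dn m F - dn m G) x y"
  proof (cases "x \<in> C \<and> y \<in> C")
    case True then show ?thesis
      using higher_deriv_diff[OF holD[OF assms(1)] holD[OF assms(2)] openU U0] by (simp add: dn_def nz_def)
  qed (auto simp: dn_def nz_def)
qed

lemma dn_const: "dn m (\<lambda>t. A) = (if m = 0 then nz A else 0)"
  unfolding dn_def nz_def by (auto simp: fun_eq_iff)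

lemma dn_sc_const: assumes "hol F" shows "dn m (\<lambda>t. sc c (F t)) = sc c (dn m F)"
proof (intro ext)
  fix x y show "dn m (\<lambda>t. sc c (F t)) x y = sc c (dn m F) x y"
  proof (cases "x \<in> C \<and> y \<in> C")
    case True then show ?thesis
      using higher_deriv_cmult[OF holD[OF assms(1)] U0 openU] by (simp add: dn_def nz_def sc_def)
  qed (auto simp: dn_def nz_def sc_def)
qed

lemma van_mono: "van (Suc m) E \<Longrightarrow> van m E"
  unfolding van_def by auto

lemma leibniz_entry:
  assumes F: "hol F" and G: "hol G" and x: "x \<in> C" and y: "y \<in> C"
  shows "dn l (lm F G) x y = (\<Sum>z\<in>C. \<Sum>p=0..l. of_nat (l choose p) * dn p F x z * dn (l - p) G z y)"
proof -
  have "dn l (lm F G) x y = (deriv ^^ l) (\<lambda>t. \<Sum>z\<in>C. F t x z * G t z y) 0"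
    using x y by (simp add: dn_def nz_def lm_def mm_apply)
  also have "\<dots> = (\<Sum>z\<in>C. (deriv ^^ l) (\<lambda>t. F t x z * G t z y) 0)"
    using holD[OF F x] holD[OF G _ y] finC openU U0
    by (intro higher_deriv_sum) (auto intro!: holomorphic_intros)
  also have "\<dots> = (\<Sum>z\<in>C. \<Sum>p=0..l. of_nat (l choose p) * dn p F x z * dn (l - p) G z y)"
  proof (rule sum.cong)
    fix z assume z: "z \<in> C"
    show "(deriv ^^ l) (\<lambda>t. F t x z * G t z y) 0 = (\<Sum>p=0..l. of_nat (l choose p) * dn p F x z * dn (l - p) G z y)"
      using higher_deriv_mult[OF holD[OF F x z] holD[OF G z y] openU U0, of l] x y z
      by (simp add: dn_def nz_def)
  qed simp
  finally show ?thesis .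
qed

lemma van_left:
  assumes F: "hol F" and E: "hol E" and v: "van m E"
  shows "van m (lm F E)" and "dn m (lm F E) = mm (F 0) (dn m E)"
proof -
  have z: "dn q E z y = 0" if "q < m" for q z y using v that unfolding van_def by simp
  have "dn l (lm F E) = 0" if l: "l < m" for l
  proof (intro ext)
    fix x y show "dn l (lm F E) x y = 0 x y"
    proof (cases "x \<in> C \<and> y \<in> C")
      case True
      then show ?thesis using leibniz_entry[OF F E, of x y l] l by (simp add: z)
    qed (auto simp: dn_def nz_def)
  qed
  then show "van m (lm F E)" unfolding van_def by simp
  show "dn m (lm F E) = mm (F 0) (dn m E)"
  proof (intro ext)
    fix x y show "dn m (lm F E) x y = mm (F 0) (dn m E) x y"
    proof (cases "x \<in> C \<and> y \<in> C")
      case True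
      have "dn m (lm F E) x y = (\<Sum>z\<in>C. \<Sum>p=0..m. of_nat (m choose p) * dn p F x z * dn (m - p) E z y)"
        using leibniz_entry[OF F E] True by simp
      also have "\<dots> = (\<Sum>z\<in>C. dn 0 F x z * dn m E z y)"
      proof (rule sum.cong)
        fix z assume "z \<in> C"
        have "(\<Sum>p=0..m. of_nat (m choose p) * dn p F x z * dn (m - p) E z y)
            = (\<Sum>p\<in>{0}. of_nat (m choose p) * dn p F x z * dn (m - p) E z y)"
          by (rule sum.mono_neutral_right) (auto simp: z)
        then show "(\<Sum>p=0..m. of_nat (m choose p) * dn p F x z * dn (m - p) E z y) = dn 0 F x z * dn m E z y"
          by simp
      qed simp
      also have "\<dots> = mm (F 0) (dn m E) x y"
        using True by (simp add: mm_apply dn_0 nz_def)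
      finally show ?thesis .
    qed (auto simp: dn_def nz_def mm_def)
  qed
qed

lemma van_right:
  assumes F: "hol F" and E: "hol E" and v: "van m E"
  shows "van m (lm E F)" and "dn m (lm E F) = mm (dn m E) (F 0)"
proof -
  have z: "dn q E z y = 0" if "q < m" for q z y using v that unfolding van_def by simp
  have "dn l (lm E F) = 0" if l: "l < m" for l
  proof (intro ext)
    fix x y show "dn l (lm E F) x y = 0 x y"
    proof (cases "x \<in> C \<and> y \<in> C")
      case True
      then show ?thesis using leibniz_entry[OF E F, of x y l] l by (simp add: z)
    qed (auto simp: dn_def nz_def)
  qed
  then show "van m (lm E F)" unfolding van_def by simp
  show "dn m (lm E F) = mm (dn m E) (F 0)"
  proof (intro ext)
    fix x y show "dn m (lm E F) x y = mm (dn m E) (F 0) x y"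
    proof (cases "x \<in> C \<and> y \<in> C")
      case True
      have "dn m (lm E F) x y = (\<Sum>z\<in>C. \<Sum>p=0..m. of_nat (m choose p) * dn p E x z * dn (m - p) F z y)"
        using leibniz_entry[OF E F] True by simp
      also have "\<dots> = (\<Sum>z\<in>C. dn m E x z * dn 0 F z y)"
      proof (rule sum.cong)
        fix z assume "z \<in> C"
        have "(\<Sum>p=0..m. of_nat (m choose p) * dn p E x z * dn (m - p) F z y)
            = (\<Sum>p\<in>{m}. of_nat (m choose p) * dn p E x z * dn (m - p) F z y)"
          by (rule sum.mono_neutral_right) (auto simp: z)
        then show "(\<Sum>p=0..m. of_nat (m choose p) * dn p E x z * dn (m - p) F z y) = dn m E x z * dn 0 F z y"
          by simp
      qed simp
      also have "\<dots> = mm (dn m E) (F 0) x y"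
        using True by (simp add: mm_apply dn_0 nz_def)
      finally show ?thesis .
    qed (auto simp: dn_def nz_def mm_def)
  qed
qed

lemma van_sandwich:
  assumes A: "hol A" and E: "hol E" and B: "hol B" and v: "van m E"
  shows "van m (\<lambda>t. mm (mm (A t) (E t)) (B t))"
    and "dn m (\<lambda>t. mm (mm (A t) (E t)) (B t)) = mm (mm (A 0) (dn m E)) (B 0)"
proof -
  have 1: "van m (lm A E)" "dn m (lm A E) = mm (A 0) (dn m E)" using van_left[OF A E v] by auto
  have h: "hol (lm A E)" using hol_lm[OF A E] .
  have eq: "(\<lambda>t. mm (mm (A t) (E t)) (B t)) = lm (lm A E) B" by (simp add: lm_def)
  show "van m (\<lambda>t. mm (mm (A t) (E t)) (B t))" using van_right(1)[OF B h 1(1)] eq by simp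
  show "dn m (\<lambda>t. mm (mm (A t) (E t)) (B t)) = mm (mm (A 0) (dn m E)) (B 0)"
    using van_right(2)[OF B h 1(1)] eq 1(2) by simp
qed

lemma dn_poly:
  assumes "i \<le> m"
  shows "dn i (\<lambda>t. sc (t ^ m / fact m) A) = (if i = m then nz A else 0)"
proof (intro ext)
  fix x y
  have e: "(\<lambda>t. sc (t ^ m / fact m) A x y) = (\<lambda>t. (A x y / fact m) * t ^ m)"
    by (auto simp: sc_def fun_eq_iff)
  have "(deriv ^^ i) (\<lambda>t. (A x y / fact m) * t ^ m) 0 = (A x y / fact m) * (deriv ^^ i) (\<lambda>t. t ^ m) 0"
    by (rule higher_deriv_cmult[where A = UNIV]) (auto intro!: holomorphic_intros)
  also have "(deriv ^^ i) (\<lambda>t. t ^ m) 0 = pochhammer (of_nat (Suc m - i)) i * (0 - 0) ^ (m - i)"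
    using higher_deriv_power[of i 0 m 0] by simp
  finally have "(deriv ^^ i) (\<lambda>t. (A x y / fact m) * t ^ m) 0 =
       (A x y / fact m) * (pochhammer (of_nat (Suc m - i)) i * (0 - 0) ^ (m - i))" .
  then show "dn i (\<lambda>t. sc (t ^ m / fact m) A) x y = (if i = m then nz A else 0) x y"
    using assms by (auto simp: dn_def nz_def e pochhammer_fact[symmetric])
qed

lemma dv_lm:
  assumes F: "hol F" and G: "hol G" and t: "t \<in> U"
  shows "nz (dv (lm F G) t) = mm (dv F t) (G t) + mm (F t) (dv G t)"
proof (intro ext)
  fix x y
  show "nz (dv (lm F G) t) x y = (mm (dv F t) (G t) + mm (F t) (dv G t)) x y"
  proof (cases "x \<in> C \<and> y \<in> C")
    case True
    then have x: "x \<in> C" and y: "y \<in> C" by auto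
    have e: "(\<lambda>s. lm F G s x y) = (\<lambda>s. \<Sum>z\<in>C. F s x z * G s z y)"
      using x y by (simp add: lm_def mm_apply)
    have "((\<lambda>s. \<Sum>z\<in>C. F s x z * G s z y) has_field_derivative
        (\<Sum>z\<in>C. deriv (\<lambda>s. F s x z) t * G t z y + F t x z * deriv (\<lambda>s. G s z y) t)) (at t)"
    proof (rule DERIV_sum)
      fix z assume z: "z \<in> C"
      have d1: "((\<lambda>s. F s x z) has_field_derivative deriv (\<lambda>s. F s x z) t) (at t)"
        using holomorphic_derivI[OF holD[OF F x z] openU t] by simp
      have d2: "((\<lambda>s. G s z y) has_field_derivative deriv (\<lambda>s. G s z y) t) (at t)"
        using holomorphic_derivI[OF holD[OF G z y] openU t] by simp
      show "((\<lambda>s. F s x z * G s z y) has_field_derivative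
          deriv (\<lambda>s. F s x z) t * G t z y + F t x z * deriv (\<lambda>s. G s z y) t) (at t)"
        using DERIV_mult[OF d1 d2] by (simp add: algebra_simps)
    qed
    then have "deriv (\<lambda>s. lm F G s x y) t =
        (\<Sum>z\<in>C. deriv (\<lambda>s. F s x z) t * G t z y + F t x z * deriv (\<lambda>s. G s z y) t)"
      unfolding e by (rule DERIV_imp_deriv)
    then show ?thesis using x y
      by (simp add: nz_def dv_def mm_apply sum.distrib)
  qed (auto simp: nz_def mm_def)
qed

end


context ana
begin

lemma avoids_dn:
  assumes "\<And>t. t \<in> U \<Longrightarrow> avoids T (F t)"
  shows "avoids T (dn m F)"
  unfolding avoids_def
proof (intro ballI)
  fix x y assume x: "x \<in> C" and y: "y \<in> C"
  have ev: "eventually (\<lambda>t. t \<in> U) (nhds 0)" using eventually_nhds_in_open[OF openU U0] .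
  show "dn m F x y = (if \<forall>i\<in>T. x i = y i then dn m F (zT T x) (zT T y) else 0)"
  proof (cases "\<forall>i\<in>T. x i = y i")
    case True
    have "\<And>t. t \<in> U \<Longrightarrow> F t x y = F t (zT T x) (zT T y)"
      using avoidsD[OF assms x y] True by simp
    then have "eventually (\<lambda>t. F t x y = F t (zT T x) (zT T y)) (nhds 0)"
      using ev by (auto elim: eventually_mono)
    then have "(deriv ^^ m) (\<lambda>t. F t x y) 0 = (deriv ^^ m) (\<lambda>t. F t (zT T x) (zT T y)) 0"
      by (simp add: higher_deriv_cong_ev)
    then show ?thesis using True x y zT_in by (simp add: dn_def nz_def)
  next
    case False
    have "\<And>t. t \<in> U \<Longrightarrow> F t x y = 0"
      using avoidsD[OF assms x y] False by simp
    then have "eventually (\<lambda>t. F t x y = (\<lambda>_. 0) t) (nhds 0)"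
      using ev by (auto elim: eventually_mono)
    then have "(deriv ^^ m) (\<lambda>t. F t x y) 0 = (deriv ^^ m) (\<lambda>_. 0) 0"
      by (rule higher_deriv_cong_ev) simp
    then show ?thesis using False x y by (auto simp: dn_def nz_def)
  qed
qed

lemma conj_commute:
  assumes "avoids W Y" "avoids (S - W) A" "mm Ai A = II"
  shows "mm (mm Ai Y) A = nz Y"
proof -
  have "mm (mm Ai Y) A = mm Ai (mm Y A)" by (simp add: mm_assoc)
  also have "mm Y A = mm A Y" by (rule avoids_commute[OF assms(1,2)])
  also have "mm Ai (mm A Y) = mm (mm Ai A) Y" by (simp add: mm_assoc)
  also have "\<dots> = nz Y" using assms(3) by simp
  finally show ?thesis .
qed

lemma conj_split:
  assumes "avoids W Y" "avoids (S - W) A" "mm Ai A = II" "nz Z = nz (Y + E)"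
  shows "mm (mm Ai Z) A = nz Y + mm (mm Ai E) A"
proof -
  have "mm (mm Ai Z) A = mm (mm Ai (nz Z)) A" by simp
  also have "\<dots> = mm (mm Ai Y) A + mm (mm Ai E) A"
    using assms(4) by (simp add: mm_add_right mm_add_left)
  also have "mm (mm Ai Y) A = nz Y" by (rule conj_commute[OF assms(1-3)])
  finally show ?thesis .
qed

lemma step_lemma:
  assumes s: "s \<in> S" and j: "j \<in> S" and sj: "s \<noteq> j" and sT: "s \<notin> T" and jT: "j \<notin> T" and TS: "T \<subseteq> S"
    and hRf: "hol Rf" and hRi: "hol Ri" and inv: "\<And>t. t \<in> U \<Longrightarrow> mm (Ri t) (Rf t) = II"
    and aRf: "\<And>t. t \<in> U \<Longrightarrow> avoids (S - {s, j}) (Rf t)"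
    and aRi: "\<And>t. t \<in> U \<Longrightarrow> avoids (S - {s, j}) (Ri t)"
    and Rf0: "nz (Rf 0) = nz (Psw s j)" and Ri0: "nz (Ri 0) = nz (Psw s j)"
    and hY: "hol Y" and hE: "hol E"
    and ZYE: "\<And>t. t \<in> U \<Longrightarrow> nz (Z t) = nz (Y t + E t)"
    and aZ: "\<And>t. t \<in> U \<Longrightarrow> avoids (insert j T) (Z t)"
    and aY: "\<And>t. t \<in> U \<Longrightarrow> avoids (insert s (insert j T)) (Y t)"
    and vE: "van m E"
  defines "PEP \<equiv> mm (mm (Psw s j) (dn m E)) (Psw s j)"
  shows "hol (\<lambda>t. Y t + sc (t ^ m / fact m) PEP)"
    and "hol (\<lambda>t. mm (mm (Ri t) (E t)) (Rf t) - sc (t ^ m / fact m) PEP)"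
    and "\<And>t. t \<in> U \<Longrightarrow> nz (mm (mm (Ri t) (Z t)) (Rf t)) =
           nz ((Y t + sc (t ^ m / fact m) PEP) + (mm (mm (Ri t) (E t)) (Rf t) - sc (t ^ m / fact m) PEP))"
    and "\<And>t. t \<in> U \<Longrightarrow> avoids (insert s T) (Y t + sc (t ^ m / fact m) PEP)"
    and "\<And>t. t \<in> U \<Longrightarrow> avoids T (mm (mm (Ri t) (Z t)) (Rf t))"
    and "van (Suc m) (\<lambda>t. mm (mm (Ri t) (E t)) (Rf t) - sc (t ^ m / fact m) PEP)"
proof -
  have hp: "(\<lambda>t. t ^ m / fact m) holomorphic_on U" by (auto intro!: holomorphic_intros)
  show "hol (\<lambda>t. Y t + sc (t ^ m / fact m) PEP)"
    by (rule hol_add[OF hY hol_sc[OF hp]])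
  have hS: "hol (\<lambda>t. mm (mm (Ri t) (E t)) (Rf t))" by (intro hol_mm hRi hE hRf)
  show "hol (\<lambda>t. mm (mm (Ri t) (E t)) (Rf t) - sc (t ^ m / fact m) PEP)"
    by (rule hol_diff[OF hS hol_sc[OF hp]])
  have sub: "S - (S - {s, j}) = {s, j}" using s j by auto
  have aY2: "avoids {s, j} (Y t)" if "t \<in> U" for t
    using aY[OF that] by (rule avoids_mono[rotated]) auto
  have aRf': "avoids (S - {s, j}) (Rf t)" if "t \<in> U" for t using aRf[OF that] .
  have split: "mm (mm (Ri t) (Z t)) (Rf t) = nz (Y t) + mm (mm (Ri t) (E t)) (Rf t)" if t: "t \<in> U" for t
    by (rule conj_split[OF aY2[OF t] _ inv[OF t] ZYE[OF t]]) (use aRf[OF t] sub in simp)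
  show "nz (mm (mm (Ri t) (Z t)) (Rf t)) =
           nz ((Y t + sc (t ^ m / fact m) PEP) + (mm (mm (Ri t) (E t)) (Rf t) - sc (t ^ m / fact m) PEP))"
    if t: "t \<in> U" for t
    using split[OF t] by (simp only: nz_add nz_diff nz_nz nz_mm) (simp add: algebra_simps)
  have aE: "avoids (insert j T) (E t)" if t: "t \<in> U" for t
  proof -
    have "nz (E t) = nz (Z t) - nz (Y t)" using ZYE[OF t] by (simp add: algebra_simps)
    moreover have "avoids (insert j T) (nz (Z t) - nz (Y t))"
      using aZ[OF t] avoids_mono[OF _ aY[OF t], of "insert j T"] by (intro avoids_diff) auto
    ultimately show ?thesis by (metis avoids_nz)
  qed
  have aPEP: "avoids (insert s T) PEP"
    unfolding PEP_def mm_Psw[OF s j]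
    by (rule avoids_swap[OF s j sj sT jT avoids_dn[OF aE]])
  show "avoids (insert s T) (Y t + sc (t ^ m / fact m) PEP)" if t: "t \<in> U" for t
    using avoids_mono[OF _ aY[OF t], of "insert s T"] aPEP by (intro avoids_add avoids_sc) auto
  show "avoids T (mm (mm (Ri t) (Z t)) (Rf t))" if t: "t \<in> U" for t
  proof -
    have "T \<subseteq> S - {s, j}" using TS sT jT by auto
    then show ?thesis using avoids_mono[OF _ aRi[OF t], of T] avoids_mono[OF _ aRf[OF t], of T]
        avoids_mono[OF _ aZ[OF t], of T]
      by (intro avoids_mm) auto
  qed
  have vS: "van m (\<lambda>t. mm (mm (Ri t) (E t)) (Rf t))"
    and dS: "dn m (\<lambda>t. mm (mm (Ri t) (E t)) (Rf t)) = mm (mm (Ri 0) (dn m E)) (Rf 0)"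
    using van_sandwich[OF hRi hE hRf vE] by auto
  have dS': "mm (mm (Ri 0) (dn m E)) (Rf 0) = PEP"
  proof -
    have "mm (mm (Ri 0) (dn m E)) (Rf 0) = mm (mm (nz (Ri 0)) (dn m E)) (nz (Rf 0))" by simp
    also have "\<dots> = PEP" unfolding PEP_def Ri0 Rf0 by simp
    finally show ?thesis .
  qed
  show "van (Suc m) (\<lambda>t. mm (mm (Ri t) (E t)) (Rf t) - sc (t ^ m / fact m) PEP)"
    unfolding van_def
  proof (intro allI impI)
    fix i assume i: "i < Suc m"
    have "dn i (\<lambda>t. mm (mm (Ri t) (E t)) (Rf t) - sc (t ^ m / fact m) PEP)
        = dn i (\<lambda>t. mm (mm (Ri t) (E t)) (Rf t)) - dn i (\<lambda>t. sc (t ^ m / fact m) PEP)"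
      by (rule dn_diff[OF hS hol_sc[OF hp]])
    also have "dn i (\<lambda>t. sc (t ^ m / fact m) PEP) = (if i = m then nz PEP else 0)"
      using i by (intro dn_poly) simp
    also have "nz PEP = PEP" unfolding PEP_def by simp
    finally have eq: "dn i (\<lambda>t. mm (mm (Ri t) (E t)) (Rf t) - sc (t ^ m / fact m) PEP)
        = dn i (\<lambda>t. mm (mm (Ri t) (E t)) (Rf t)) - (if i = m then PEP else 0)" .
    show "dn i (\<lambda>t. mm (mm (Ri t) (E t)) (Rf t) - sc (t ^ m / fact m) PEP) = 0"
    proof (cases "i = m")
      case True
      then show ?thesis unfolding eq using dS dS' by simp
    next
      case False
      then have "i < m" using i by simp
      then have "dn i (\<lambda>t. mm (mm (Ri t) (E t)) (Rf t)) = 0" using vS unfolding van_def by blast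
      then show ?thesis unfolding eq using False by simp
    qed
  qed
qed

fun chainZ :: "(nat \<Rightarrow> complex \<Rightarrow> sop) \<Rightarrow> (nat \<Rightarrow> complex \<Rightarrow> sop) \<Rightarrow> (complex \<Rightarrow> sop) \<Rightarrow> nat list \<Rightarrow> complex \<Rightarrow> sop" where
  "chainZ Rf Ri L [] = L"
| "chainZ Rf Ri L (j # js) = (\<lambda>t. mm (mm (Ri j t) (chainZ Rf Ri L js t)) (Rf j t))"

definition goodR :: "nat \<Rightarrow> nat \<Rightarrow> (complex \<Rightarrow> sop) \<Rightarrow> (complex \<Rightarrow> sop) \<Rightarrow> bool" where
  "goodR s j Rfj Rij \<longleftrightarrow> hol Rfj \<and> hol Rij \<and> (\<forall>t\<in>U. mm (Rij t) (Rfj t) = II)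
     \<and> (\<forall>t\<in>U. avoids (S - {s, j}) (Rfj t)) \<and> (\<forall>t\<in>U. avoids (S - {s, j}) (Rij t))
     \<and> nz (Rfj 0) = nz (Psw s j) \<and> nz (Rij 0) = nz (Psw s j)"

lemma chain_lemma:
  assumes s: "s \<in> S" and T0S: "T0 \<subseteq> S" and sT0: "s \<notin> T0"
    and hL: "hol L" and aL: "\<And>t. t \<in> U \<Longrightarrow> avoids T0 (L t)"
  shows "distinct js \<Longrightarrow> set js \<subseteq> T0 \<Longrightarrow> (\<forall>j\<in>set js. goodR s j (Rf j) (Ri j)) \<Longrightarrow>
     \<exists>Y E. hol Y \<and> hol E \<and> (\<forall>t\<in>U. nz (chainZ Rf Ri L js t) = nz (Y t + E t))
     \<and> (\<forall>t\<in>U. avoids (insert s (T0 - set js)) (Y t))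
     \<and> (\<forall>t\<in>U. avoids (T0 - set js) (chainZ Rf Ri L js t))
     \<and> van (length js) E"
proof (induction js)
  case Nil
  have "hol (\<lambda>t. 0)" by (rule hol_const)
  moreover have "\<forall>t\<in>U. nz (chainZ Rf Ri L [] t) = nz ((\<lambda>t. 0) t + L t)" by simp
  moreover have "\<forall>t\<in>U. avoids (insert s (T0 - set [])) ((\<lambda>t. 0) t)" by (simp add: avoids_zero)
  moreover have "\<forall>t\<in>U. avoids (T0 - set []) (chainZ Rf Ri L [] t)" using aL by simp
  moreover have "van (length []) L" by (simp add: van_def)
  ultimately show ?case using hL by (intro exI[of _ "\<lambda>t. 0"] exI[of _ L] conjI)
next
  case (Cons j js)
  from Cons.prems have jT0: "j \<in> T0" and jnot: "j \<notin> set js" by auto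
  have gj: "goodR s j (Rf j) (Ri j)" using Cons.prems(3) by simp
  have IH: "\<exists>Y E. hol Y \<and> hol E \<and> (\<forall>t\<in>U. nz (chainZ Rf Ri L js t) = nz (Y t + E t))
     \<and> (\<forall>t\<in>U. avoids (insert s (T0 - set js)) (Y t))
     \<and> (\<forall>t\<in>U. avoids (T0 - set js) (chainZ Rf Ri L js t))
     \<and> van (length js) E"
    using Cons.prems by (intro Cons.IH) auto
  obtain Y E where hY: "hol Y" and hE: "hol E"
    and ZYE: "\<forall>t\<in>U. nz (chainZ Rf Ri L js t) = nz (Y t + E t)"
    and aY: "\<forall>t\<in>U. avoids (insert s (T0 - set js)) (Y t)"
    and aZ: "\<forall>t\<in>U. avoids (T0 - set js) (chainZ Rf Ri L js t)"
    and vE: "van (length js) E"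
    using IH by metis
  define T where "T = T0 - set (j # js)"
  have e1: "insert j T = T0 - set js" using jT0 jnot by (auto simp: T_def)
  have jS: "j \<in> S" using jT0 T0S by auto
  have sj: "s \<noteq> j" using sT0 jT0 by auto
  have sT: "s \<notin> T" and jT: "j \<notin> T" and TS: "T \<subseteq> S" using sT0 T0S by (auto simp: T_def)
  have g1: "hol (Rf j)" "hol (Ri j)" "\<And>t. t \<in> U \<Longrightarrow> mm (Ri j t) (Rf j t) = II"
     "\<And>t. t \<in> U \<Longrightarrow> avoids (S - {s, j}) (Rf j t)" "\<And>t. t \<in> U \<Longrightarrow> avoids (S - {s, j}) (Ri j t)"
     "nz (Rf j 0) = nz (Psw s j)" "nz (Ri j 0) = nz (Psw s j)"
    using gj unfolding goodR_def by auto
  have A: "\<And>t. t \<in> U \<Longrightarrow> nz (chainZ Rf Ri L js t) = nz (Y t + E t)" using ZYE by auto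
  have B: "\<And>t. t \<in> U \<Longrightarrow> avoids (insert j T) (chainZ Rf Ri L js t)" using aZ e1 by auto
  have Cc: "\<And>t. t \<in> U \<Longrightarrow> avoids (insert s (insert j T)) (Y t)" using aY e1 by auto
  note st' = step_lemma[OF s jS sj sT jT TS g1 hY hE A B Cc vE]
  have r3: "\<forall>t\<in>U. nz (chainZ Rf Ri L (j # js) t) = nz ((\<lambda>t. Y t + sc (t ^ length js / fact (length js)) (mm (mm (Psw s j) (dn (length js) E)) (Psw s j))) t
     + (\<lambda>t. mm (mm (Ri j t) (E t)) (Rf j t) - sc (t ^ length js / fact (length js)) (mm (mm (Psw s j) (dn (length js) E)) (Psw s j))) t)"
    using st'(3) by simp
  have r4: "\<forall>t\<in>U. avoids (insert s (T0 - set (j # js))) ((\<lambda>t. Y t + sc (t ^ length js / fact (length js)) (mm (mm (Psw s j) (dn (length js) E)) (Psw s j))) t)"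
    using st'(4) by (simp add: T_def)
  have r5: "\<forall>t\<in>U. avoids (T0 - set (j # js)) (chainZ Rf Ri L (j # js) t)"
    using st'(5) by (simp add: T_def)
  have r6: "van (length (j # js)) (\<lambda>t. mm (mm (Ri j t) (E t)) (Rf j t) - sc (t ^ length js / fact (length js)) (mm (mm (Psw s j) (dn (length js) E)) (Psw s j)))"
    using st'(6) by simp
  show ?case
    by (rule exI, rule exI, rule conjI[OF st'(1) conjI[OF st'(2) conjI[OF r3 conjI[OF r4 conjI[OF r5 r6]]]]])
qed

lemma core_final:
  assumes hA: "hol A" and hAi: "hol Ai" and inv: "\<And>t. t \<in> U \<Longrightarrow> mm (Ai t) (A t) = II"
    and aA: "\<And>t. t \<in> U \<Longrightarrow> avoids (S - W) (A t)"
    and hY: "hol Y" and hE: "hol E"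
    and ZYE: "\<And>t. t \<in> U \<Longrightarrow> nz (Z t) = nz (Y t + E t)"
    and aY: "\<And>t. t \<in> U \<Longrightarrow> avoids W (Y t)"
    and vE: "van m E"
  shows "dn m (\<lambda>t. mm (mm (Ai t) (Z t)) (A t)) = mm (mm (Ai 0) (dn m Z)) (A 0)"
proof -
  have hS: "hol (\<lambda>t. mm (mm (Ai t) (E t)) (A t))" by (intro hol_mm hAi hE hA)
  have "dn m (\<lambda>t. mm (mm (Ai t) (Z t)) (A t)) = dn m (\<lambda>t. nz (Y t) + mm (mm (Ai t) (E t)) (A t))"
    by (rule dn_cong) (simp add: conj_split[OF aY aA inv ZYE])
  also have "\<dots> = dn m (\<lambda>t. nz (Y t)) + dn m (\<lambda>t. mm (mm (Ai t) (E t)) (A t))"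
    by (rule dn_add[OF hol_nz[OF hY] hS])
  also have "dn m (\<lambda>t. mm (mm (Ai t) (E t)) (A t)) = mm (mm (Ai 0) (dn m E)) (A 0)"
    using van_sandwich[OF hAi hE hA vE] by simp
  finally have L: "dn m (\<lambda>t. mm (mm (Ai t) (Z t)) (A t)) = dn m Y + mm (mm (Ai 0) (dn m E)) (A 0)"
    by (simp only: dn_nz)
  have "dn m Z = dn m (\<lambda>t. Y t + E t)" by (rule dn_cong) (simp add: ZYE)
  also have "\<dots> = dn m Y + dn m E" by (rule dn_add[OF hY hE])
  finally have dZ: "dn m Z = dn m Y + dn m E" .
  have c: "mm (mm (Ai 0) (dn m Y)) (A 0) = dn m Y"
    using conj_commute[OF avoids_dn[OF aY] aA[OF U0] inv[OF U0]] by simp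
  show ?thesis unfolding L dZ by (simp add: mm_add_right mm_add_left c)
qed

end


lemma hol_from_double:
  fixes d :: "nat \<Rightarrow> nat \<Rightarrow> complex" and r :: real
  assumes r: "0 < r"
    and hs: "\<And>w. norm w < r \<Longrightarrow> ((\<lambda>(i, j). d i j * w ^ i) has_sum F w) UNIV"
  shows "F holomorphic_on ball 0 r"
proof -
  define w0 :: complex where "w0 = of_real (r / 2)"
  have w0: "norm w0 < r" "w0 \<noteq> 0" using r by (auto simp: w0_def)
  have summ: "(\<lambda>j. d i j) summable_on UNIV" for i
  proof -
    have "(\<lambda>(i, j). d i j * w0 ^ i) summable_on (Sigma UNIV (\<lambda>_. UNIV))"
      using hs[OF w0(1)] by (auto simp: summable_on_def)
    then have "(\<lambda>j. d i j * w0 ^ i) summable_on UNIV"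
      using summable_on_SigmaD1[of "\<lambda>i j. d i j * w0 ^ i" UNIV "\<lambda>_. UNIV" i] by simp
    then have "(\<lambda>j. (1 / w0 ^ i) * (d i j * w0 ^ i)) summable_on UNIV"
      by (rule summable_on_cmult_right)
    moreover have "(\<lambda>j. (1 / w0 ^ i) * (d i j * w0 ^ i)) = (\<lambda>j. d i j)" using w0(2) by (auto simp: fun_eq_iff)
    ultimately show ?thesis by simp
  qed
  define b where "b i = infsum (\<lambda>j. d i j) UNIV" for i
  have "(\<lambda>i. b i * (w - 0) ^ i) sums F w" if w: "w \<in> ball 0 r" for w
  proof -
    have w': "norm w < r" using w by simp
    have inner: "((\<lambda>j. d i j * w ^ i) has_sum (b i * w ^ i)) UNIV" for i
      unfolding b_def by (rule has_sum_cmult_left[OF has_sum_infsum[OF summ]])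
    have "((\<lambda>(i, j). d i j * w ^ i) has_sum F w) (Sigma UNIV (\<lambda>_. UNIV))"
      using hs[OF w'] by simp
    then have "((\<lambda>i. b i * w ^ i) has_sum F w) UNIV"
      by (rule has_sum_SigmaD) (use inner in simp)
    then show ?thesis by (simp add: has_sum_imp_sums)
  qed
  then show ?thesis by (rule power_series_holomorphic)
qed

lemma analytic_R_hol:
  assumes an: "analytic_R n r R" and v: "norm v < r"
    and p: "fst p < n" "snd p < n" and q: "fst q < n" "snd q < n"
  shows "(\<lambda>t. R t v p q) holomorphic_on ball 0 r" and "(\<lambda>t. R v t p q) holomorphic_on ball 0 r"
proof -
  have r: "0 < r" using an by (simp add: analytic_R_def)
  have "\<exists>c :: nat \<times> nat \<Rightarrow> complex. \<forall>u v. norm u < r \<longrightarrow> norm v < r \<longrightarrow>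
      ((\<lambda>(i, j). c (i, j) * u ^ i * v ^ j) has_sum R u v p q) UNIV"
  proof -
    obtain p1 p2 q1 q2 where pq: "p = (p1, p2)" "q = (q1, q2)" by (cases p, cases q) auto
    show ?thesis using an p q unfolding analytic_R_def pq by simp
  qed
  then obtain c :: "nat \<times> nat \<Rightarrow> complex" where c0: "\<forall>u v. norm u < r \<longrightarrow> norm v < r \<longrightarrow>
      ((\<lambda>(i, j). c (i, j) * u ^ i * v ^ j) has_sum R u v p q) UNIV" by blast
  have c: "((\<lambda>(i, j). c (i, j) * u ^ i * v ^ j) has_sum R u v p q) UNIV" if "norm u < r" "norm v < r" for u v
    using c0 that by blast
  show "(\<lambda>t. R t v p q) holomorphic_on ball 0 r"
  proof (rule hol_from_double[OF r, where d = "\<lambda>i j. c (i, j) * v ^ j"])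
    fix w :: complex assume w: "norm w < r"
    have "(\<lambda>(i, j). c (i, j) * v ^ j * w ^ i) = (\<lambda>(i, j). c (i, j) * w ^ i * v ^ j)"
      by (auto simp: fun_eq_iff mult_ac)
    then show "((\<lambda>(i, j). c (i, j) * v ^ j * w ^ i) has_sum R w v p q) UNIV"
      using c[OF w v] by simp
  qed
  show "(\<lambda>t. R v t p q) holomorphic_on ball 0 r"
  proof (rule hol_from_double[OF r, where d = "\<lambda>j i. c (i, j) * v ^ i"])
    fix w :: complex assume w: "norm w < r"
    have h: "((\<lambda>(i, j). c (i, j) * v ^ i * w ^ j) has_sum R v w p q) UNIV" using c[OF v w] .
    have "((\<lambda>(i, j). c (i, j) * v ^ i * w ^ j) \<circ> prod.swap has_sum R v w p q) UNIV"
      using has_sum_reindex[of prod.swap UNIV "\<lambda>(i, j). c (i, j) * v ^ i * w ^ j" "R v w p q"] h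
      by simp
    moreover have "(\<lambda>(i, j). c (i, j) * v ^ i * w ^ j) \<circ> prod.swap = (\<lambda>(j, i). c (i, j) * v ^ i * w ^ j)"
      by (auto simp: fun_eq_iff)
    ultimately show "((\<lambda>(j, i). c (i, j) * v ^ i * w ^ j) has_sum R v w p q) UNIV" by simp
  qed
qed



lemma shift_shift: "shift (shift u I t) I s = shift u I (t + s)"
  by (auto simp: shift_def fun_eq_iff)

lemma shift_0[simp]: "shift u I 0 = u"
  by (auto simp: shift_def fun_eq_iff)

lemma deriv_shift0: "deriv (\<lambda>s. f (t + s)) 0 = deriv f t"
proof -
  have "\<And>D. ((\<lambda>s. f (t + s)) has_field_derivative D) (at 0) \<longleftrightarrow> (f has_field_derivative D) (at t)"
    using DERIV_shift[of f _ 0 t] by (simp add: add.commute)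
  then show ?thesis unfolding deriv_def by simp
qed

lemma Psw_sym: "i \<noteq> j \<Longrightarrow> Psw i j = Psw j i"
  unfolding Psw_def sw_def by (auto simp: fun_eq_iff)

context ops
begin

lemma sum_two_slot:
  assumes i: "i \<in> S" and j: "j \<in> S" and ij: "i \<noteq> j" and x: "x \<in> C"
  shows "(\<Sum>z\<in>C. if (\<forall>l. l \<noteq> i \<longrightarrow> l \<noteq> j \<longrightarrow> x l = z l) then f z else 0)
       = (\<Sum>c<n. \<Sum>e<n. f (x(i := c, j := e)))"
proof -
  define g where "g = (\<lambda>(c, e). x(i := c, j := e))"
  define D where "D = {..<n} \<times> {..<n}"
  define Z where "Z = {z \<in> C. \<forall>l. l \<noteq> i \<longrightarrow> l \<noteq> j \<longrightarrow> x l = z l}"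
  have inj: "inj_on g D"
    unfolding inj_on_def g_def D_def
  proof (clarify)
    fix c e c' e'
    assume h: "x(i := c, j := e) = x(i := c', j := e')"
    have "c = c'" using fun_cong[OF h, of i] ij by simp
    moreover have "e = e'" using fun_cong[OF h, of j] by simp
    ultimately show "c = c' \<and> e = e'" by simp
  qed
  have img: "g ` D = Z"
  proof
    show "g ` D \<subseteq> Z" using x i j by (auto simp: g_def D_def Z_def cfgs_def)
    show "Z \<subseteq> g ` D"
    proof
      fix z assume z: "z \<in> Z"
      have "z = g (z i, z j)" using z ij by (auto simp: g_def Z_def fun_eq_iff)
      moreover have "(z i, z j) \<in> D" using z i j by (auto simp: D_def Z_def cfgs_def)
      ultimately show "z \<in> g ` D" by blast
    qed
  qed
  have "(\<Sum>z\<in>C. if (\<forall>l. l \<noteq> i \<longrightarrow> l \<noteq> j \<longrightarrow> x l = z l) then f z else 0) = (\<Sum>z\<in>Z. f z)"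
    unfolding Z_def using finC by (simp add: sum.inter_filter)
  also have "\<dots> = (\<Sum>p\<in>D. f (g p))"
    unfolding img[symmetric] by (rule sum.reindex[OF inj, unfolded comp_def])
  also have "\<dots> = (\<Sum>c<n. \<Sum>e<n. f (x(i := c, j := e)))"
    unfolding D_def g_def sum.cartesian_product by (simp add: case_prod_unfold)
  finally show ?thesis .
qed

lemma Rop_prod:
  assumes i: "i \<in> S" and j: "j \<in> S" and ij: "i \<noteq> j" and x: "x \<in> C"
  shows "opmul S n (Rop R i j w) (Rop R j i w) x y =
    (if (\<forall>l. l \<noteq> i \<longrightarrow> l \<noteq> j \<longrightarrow> x l = y l)
     then (\<Sum>c<n. \<Sum>e<n. R (w i) (w j) (x i, x j) (c, e) * R (w j) (w i) (e, c) (y j, y i)) else 0)"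
proof -
  define f where "f z = R (w i) (w j) (x i, x j) (z i, z j) *
     (R (w j) (w i) (z j, z i) (y j, y i) * (if (\<forall>l. l \<noteq> j \<longrightarrow> l \<noteq> i \<longrightarrow> z l = y l) then 1 else 0))" for z
  have "opmul S n (Rop R i j w) (Rop R j i w) x y =
      (\<Sum>z\<in>C. if (\<forall>l. l \<noteq> i \<longrightarrow> l \<noteq> j \<longrightarrow> x l = z l) then f z else 0)"
    unfolding opmul_def Rop_def f_def by (rule sum.cong) auto
  also have "\<dots> = (\<Sum>c<n. \<Sum>e<n. f (x(i := c, j := e)))"
    by (rule sum_two_slot[OF i j ij x])
  also have "\<dots> = (\<Sum>c<n. \<Sum>e<n. (if (\<forall>l. l \<noteq> i \<longrightarrow> l \<noteq> j \<longrightarrow> x l = y l) then 1 else 0) *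
       (R (w i) (w j) (x i, x j) (c, e) * R (w j) (w i) (e, c) (y j, y i)))"
  proof -
    have "(\<forall>l. l \<noteq> j \<longrightarrow> l \<noteq> i \<longrightarrow> (x(i := c, j := e)) l = y l) \<longleftrightarrow> (\<forall>l. l \<noteq> i \<longrightarrow> l \<noteq> j \<longrightarrow> x l = y l)" for c e
      by auto
    then show ?thesis unfolding f_def using ij by (simp add: mult_ac)
  qed
  also have "\<dots> = (if (\<forall>l. l \<noteq> i \<longrightarrow> l \<noteq> j \<longrightarrow> x l = y l)
     then (\<Sum>c<n. \<Sum>e<n. R (w i) (w j) (x i, x j) (c, e) * R (w j) (w i) (e, c) (y j, y i)) else 0)"
    by (cases "\<forall>l. l \<noteq> i \<longrightarrow> l \<noteq> j \<longrightarrow> x l = y l") auto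
  finally show ?thesis .
qed

lemma Rop_inv:
  assumes i: "i \<in> S" and j: "j \<in> S" and ij: "i \<noteq> j"
    and U2: "\<And>a b a' b'. a < n \<Longrightarrow> b < n \<Longrightarrow> a' < n \<Longrightarrow> b' < n \<Longrightarrow>
       (\<Sum>c<n. \<Sum>e<n. R (w i) (w j) (a, b) (c, e) * R (w j) (w i) (e, c) (b', a')) = (if a = a' \<and> b = b' then 1 else 0)"
  shows "mm (Rop R i j w) (Rop R j i w) = II"
proof (intro ext)
  fix x y
  show "mm (Rop R i j w) (Rop R j i w) x y = II x y"
  proof (cases "x \<in> C \<and> y \<in> C")
    case True
    then have x: "x \<in> C" and y: "y \<in> C" by auto
    have lt: "x i < n" "x j < n" "y i < n" "y j < n" using x y i j by (auto simp: cfgs_def)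
    have "(\<forall>l. l \<noteq> i \<longrightarrow> l \<noteq> j \<longrightarrow> x l = y l) \<and> x i = y i \<and> x j = y j \<longleftrightarrow> x = y"
      by (auto simp: fun_eq_iff)
    then show ?thesis using Rop_prod[OF i j ij x, of R w y] U2[OF lt(1,2,3,4)] x y
      by (auto simp: mm_def nz_def II_def opid_def)
  qed (auto simp: mm_def nz_def II_def)
qed

lemma Rop_Psw:
  assumes i: "i \<in> S" and j: "j \<in> S" and ij: "i \<noteq> j" and wi: "w i = 0" and wj: "w j = 0"
    and reg: "\<And>p q. fst p < n \<Longrightarrow> snd p < n \<Longrightarrow> fst q < n \<Longrightarrow> snd q < n \<Longrightarrow>
      R 0 0 p q = (if fst p = snd q \<and> snd p = fst q then 1 else 0)"
  shows "nz (Rop R i j w) = nz (Psw i j)"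
proof (intro ext)
  fix x y
  show "nz (Rop R i j w) x y = nz (Psw i j) x y"
  proof (cases "x \<in> C \<and> y \<in> C")
    case True
    then have x: "x \<in> C" and y: "y \<in> C" by auto
    have lt: "x i < n" "x j < n" "y i < n" "y j < n" using x y i j by (auto simp: cfgs_def)
    have "(x i = y j \<and> x j = y i) \<and> (\<forall>l. l \<noteq> i \<longrightarrow> l \<noteq> j \<longrightarrow> x l = y l) \<longleftrightarrow> y = sw i j x"
      using ij by (auto simp: sw_def fun_eq_iff)
    then show ?thesis using x y reg[of "(x i, x j)" "(y i, y j)"] lt
      by (auto simp: nz_def Rop_def Psw_def wi wj)
  qed (auto simp: nz_def)
qed

lemma avoids_Rop:
  shows "avoids (S - {i, j}) (Rop R i j w)"
  unfolding avoids_def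
proof (intro ballI)
  fix x y assume x: "x \<in> C" and y: "y \<in> C"
  have xo: "\<And>l. l \<notin> S \<Longrightarrow> x l = 0" and yo: "\<And>l. l \<notin> S \<Longrightarrow> y l = 0"
    using x y by (auto simp: cfgs_def)
  have e1: "(\<forall>l. l \<noteq> i \<longrightarrow> l \<noteq> j \<longrightarrow> x l = y l) \<longleftrightarrow> (\<forall>l\<in>S - {i, j}. x l = y l)"
  proof
    assume "\<forall>l. l \<noteq> i \<longrightarrow> l \<noteq> j \<longrightarrow> x l = y l"
    then show "\<forall>l\<in>S - {i, j}. x l = y l" by auto
  next
    assume h: "\<forall>l\<in>S - {i, j}. x l = y l"
    show "\<forall>l. l \<noteq> i \<longrightarrow> l \<noteq> j \<longrightarrow> x l = y l"
    proof (intro allI impI)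
      fix l assume "l \<noteq> i" "l \<noteq> j"
      then show "x l = y l" using h xo yo by (cases "l \<in> S") auto
    qed
  qed
  have e2: "(\<forall>l. l \<noteq> i \<longrightarrow> l \<noteq> j \<longrightarrow> zT (S - {i, j}) x l = zT (S - {i, j}) y l)"
    using xo yo by (auto simp: zT_def)
  have e3: "zT (S - {i, j}) x i = x i" "zT (S - {i, j}) x j = x j"
     "zT (S - {i, j}) y i = y i" "zT (S - {i, j}) y j = y j" by (auto simp: zT_def)
  show "Rop R i j w x y = (if \<forall>l\<in>S - {i, j}. x l = y l then Rop R i j w (zT (S - {i, j}) x) (zT (S - {i, j}) y) else 0)"
    unfolding Rop_def using e1 e2 e3 by simp
qed

lemma nz_opprod_Cons: "nz (opprod S n (A # As)) = mm A (opprod S n As)"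
  by (simp add: opprod_def mm_def)

lemma nz_opprod_Nil: "nz (opprod S n []) = II"
  by (simp add: opprod_def II_def)

lemma nz_opprod_append: "nz (opprod S n (As @ Bs)) = mm (opprod S n As) (opprod S n Bs)"
proof (induction As)
  case Nil
  then show ?case by (simp add: opprod_def)
next
  case (Cons A As)
  have "nz (opprod S n ((A # As) @ Bs)) = mm A (opprod S n (As @ Bs))"
    using nz_opprod_Cons by simp
  also have "\<dots> = mm A (nz (opprod S n (As @ Bs)))" by simp
  also have "\<dots> = mm A (mm (opprod S n As) (opprod S n Bs))" using Cons by simp
  also have "\<dots> = mm (mm A (opprod S n As)) (opprod S n Bs)" by (simp add: mm_assoc)
  also have "\<dots> = mm (nz (opprod S n (A # As))) (opprod S n Bs)" using nz_opprod_Cons by simp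
  finally show ?case by simp
qed

lemma nz_opprod_single: "nz (opprod S n [A]) = nz A"
  by (simp add: opprod_def opmul_mm)

lemma nz_opprod_cong: "(\<And>x. x \<in> set xs \<Longrightarrow> nz (f x) = nz (g x)) \<Longrightarrow>
    nz (opprod S n (map f xs)) = nz (opprod S n (map g xs))"
proof (induction xs)
  case Nil then show ?case by simp
next
  case (Cons a xs)
  have "nz (opprod S n (map f (a # xs))) = mm (nz (f a)) (nz (opprod S n (map f xs)))"
    by (simp add: nz_opprod_Cons)
  also have "\<dots> = mm (nz (g a)) (nz (opprod S n (map g xs)))" using Cons by simp
  also have "\<dots> = nz (opprod S n (map g (a # xs)))" by (simp add: nz_opprod_Cons)
  finally show ?case .
qed

lemma opprod_inv:
  assumes "\<And>x. x \<in> set xs \<Longrightarrow> mm (g x) (f x) = II \<and> mm (f x) (g x) = II"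
  shows "mm (opprod S n (map g (rev xs))) (opprod S n (map f xs)) = II
       \<and> mm (opprod S n (map f xs)) (opprod S n (map g (rev xs))) = II"
  using assms
proof (induction xs)
  case Nil then show ?case by (simp add: opprod_def II_def)
next
  case (Cons a xs)
  define F where "F = opprod S n (map f xs)"
  define G where "G = opprod S n (map g (rev xs))"
  have IH: "mm G F = II" "mm F G = II" using Cons unfolding F_def G_def by auto
  have a: "mm (g a) (f a) = II" "mm (f a) (g a) = II" using Cons.prems by auto
  have eF: "nz (opprod S n (map f (a # xs))) = mm (f a) F" unfolding F_def by (simp add: nz_opprod_Cons)
  have eG: "nz (opprod S n (map g (rev (a # xs)))) = mm G (g a)"
  proof -
    have "nz (opprod S n (map g (rev (a # xs)))) = mm G (opprod S n [g a])"
      unfolding G_def by (simp add: nz_opprod_append)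
    also have "\<dots> = mm G (nz (opprod S n [g a]))" by simp
    also have "\<dots> = mm G (g a)" by (simp add: nz_opprod_single)
    finally show ?thesis .
  qed
  have 1: "mm (opprod S n (map g (rev (a # xs)))) (opprod S n (map f (a # xs))) = II"
  proof -
    have "mm (opprod S n (map g (rev (a # xs)))) (opprod S n (map f (a # xs)))
        = mm (nz (opprod S n (map g (rev (a # xs))))) (nz (opprod S n (map f (a # xs))))" by simp
    also have "\<dots> = mm (mm G (g a)) (mm (f a) F)" unfolding eF eG ..
    also have "\<dots> = mm G (mm (mm (g a) (f a)) F)" by (simp add: mm_assoc)
    also have "\<dots> = II" using a IH by simp
    finally show ?thesis .
  qed
  have 2: "mm (opprod S n (map f (a # xs))) (opprod S n (map g (rev (a # xs)))) = II"
  proof -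
    have "mm (opprod S n (map f (a # xs))) (opprod S n (map g (rev (a # xs))))
        = mm (nz (opprod S n (map f (a # xs)))) (nz (opprod S n (map g (rev (a # xs)))))" by simp
    also have "\<dots> = mm (mm (f a) F) (mm G (g a))" unfolding eF eG ..
    also have "\<dots> = mm (f a) (mm (mm F G) (g a))" by (simp add: mm_assoc)
    also have "\<dots> = II" using a IH by simp
    finally show ?thesis .
  qed
  show ?case using 1 2 by simp
qed

lemma opinv_unique:
  assumes "mm A B = II" "mm B A = II"
  shows "nz (opinv S n A) = nz B"
proof -
  have ex: "\<exists>B'. op_eq S n (opmul S n A B') opid \<and> op_eq S n (opmul S n B' A) opid"
    using assms by (intro exI[of _ B]) (simp add: op_eq_nz mm_def II_def)
  define B' where "B' = opinv S n A"
  have "op_eq S n (opmul S n A B') opid \<and> op_eq S n (opmul S n B' A) opid"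
    unfolding B'_def opinv_def by (rule someI_ex[OF ex])
  then have h: "mm A B' = II" "mm B' A = II" by (auto simp: op_eq_nz mm_def II_def)
  have "nz B' = mm B' (mm A B)" using assms by simp
  also have "\<dots> = mm (mm B' A) B" by (simp add: mm_assoc)
  also have "\<dots> = nz B" using h by simp
  finally show ?thesis unfolding B'_def .
qed

lemma avoids_opprod: "(\<And>x. x \<in> set xs \<Longrightarrow> avoids T (f x)) \<Longrightarrow> avoids T (opprod S n (map f xs))"
proof (induction xs)
  case Nil
  have "avoids T (nz (opprod S n []))" by (simp only: nz_opprod_Nil avoids_II)
  then show ?case by simp
next
  case (Cons a xs)
  have "avoids T (mm (f a) (opprod S n (map f xs)))" using Cons by (intro avoids_mm) auto
  then have "avoids T (nz (opprod S n (map f (a # xs))))" by (simp add: nz_opprod_Cons)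
  then show ?case by simp
qed

end

context ana
begin

lemma hol_opprod: "(\<And>x. x \<in> set xs \<Longrightarrow> hol (G x)) \<Longrightarrow> hol (\<lambda>t. opprod S n (map (\<lambda>x. G x t) xs))"
proof (induction xs)
  case Nil then show ?case by (simp add: opprod_def hol_const)
next
  case (Cons a xs)
  have "hol (\<lambda>t. mm (G a t) (opprod S n (map (\<lambda>x. G x t) xs)))"
    using Cons by (intro hol_mm) auto
  then show ?case by (rule hol_cong[rotated]) (simp add: nz_opprod_Cons)
qed

lemma avoids_dv:
  assumes "\<And>t. t \<in> U \<Longrightarrow> avoids T (F t)" "s \<in> U"
  shows "avoids T (dv F s)"
  unfolding avoids_def
proof (intro ballI)
  fix x y assume x: "x \<in> C" and y: "y \<in> C"
  have ev: "eventually (\<lambda>t. t \<in> U) (nhds s)" using eventually_nhds_in_open[OF openU assms(2)] .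
  show "dv F s x y = (if \<forall>i\<in>T. x i = y i then dv F s (zT T x) (zT T y) else 0)"
  proof (cases "\<forall>i\<in>T. x i = y i")
    case True
    have "\<And>t. t \<in> U \<Longrightarrow> F t x y = F t (zT T x) (zT T y)"
      using avoidsD[OF assms(1) x y] True by simp
    then have "eventually (\<lambda>t. F t x y = F t (zT T x) (zT T y)) (nhds s)"
      using ev by (auto elim: eventually_mono)
    then have "deriv (\<lambda>t. F t x y) s = deriv (\<lambda>t. F t (zT T x) (zT T y)) s"
      by (simp add: deriv_cong_ev)
    then show ?thesis using True by (simp add: dv_def)
  next
    case False
    have "\<And>t. t \<in> U \<Longrightarrow> F t x y = 0"
      using avoidsD[OF assms(1) x y] False by simp
    then have "eventually (\<lambda>t. F t x y = (\<lambda>_. 0) t) (nhds s)"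
      using ev by (auto elim: eventually_mono)
    then have "deriv (\<lambda>t. F t x y) s = deriv (\<lambda>_. 0) s"
      by (rule deriv_cong_ev) simp
    then show ?thesis using False by (auto simp: dv_def)
  qed
qed

end


context ana
begin

lemma three_factor:
  assumes hP1: "hol P1" and hP2: "hol P2" and hP3: "hol P3"
    and i1: "\<And>t. t \<in> U \<Longrightarrow> mm (Q1 t) (P1 t) = II"
    and i2: "\<And>t. t \<in> U \<Longrightarrow> mm (Q2 t) (P2 t) = II"
    and i3: "\<And>t. t \<in> U \<Longrightarrow> mm (Q3 t) (P3 t) = II"
    and M: "\<And>t. t \<in> U \<Longrightarrow> nz (M t) = mm (P3 t) (mm (P2 t) (P1 t))"
    and t: "t \<in> U"
  shows "mm (mm (Q1 t) (mm (Q2 t) (Q3 t))) (dv M t) =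
     mm (mm (Q1 t) (mm (mm (Q2 t) (mm (Q3 t) (dv P3 t))) (P2 t))) (P1 t)
     + mm (mm (Q1 t) (mm (Q2 t) (dv P2 t))) (P1 t) + mm (Q1 t) (dv P1 t)"
proof -
  have h21: "hol (lm P2 P1)" by (rule hol_lm[OF hP2 hP1])
  have "nz (dv M t) = nz (dv (lm P3 (lm P2 P1)) t)"
    by (rule dv_cong[OF _ t]) (simp add: M lm_def)
  also have "\<dots> = mm (dv P3 t) (lm P2 P1 t) + mm (P3 t) (dv (lm P2 P1) t)"
    by (rule dv_lm[OF hP3 h21 t])
  finally have d1: "nz (dv M t) = mm (dv P3 t) (mm (P2 t) (P1 t)) + mm (P3 t) (nz (dv (lm P2 P1) t))"
    by (simp add: lm_def)
  have d2: "nz (dv (lm P2 P1) t) = mm (dv P2 t) (P1 t) + mm (P2 t) (dv P1 t)"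
    by (rule dv_lm[OF hP2 hP1 t])
  have c2: "mm (Q2 t) (mm (P2 t) X) = nz X" for X
    using i2[OF t] by (simp add: mm_assoc[symmetric])
  have c3: "mm (Q3 t) (mm (P3 t) X) = nz X" for X
    using i3[OF t] by (simp add: mm_assoc[symmetric])
  have "mm (mm (Q1 t) (mm (Q2 t) (Q3 t))) (dv M t) = mm (mm (Q1 t) (mm (Q2 t) (Q3 t))) (nz (dv M t))"
    by simp
  also have "\<dots> = mm (Q1 t) (mm (Q2 t) (mm (Q3 t) (mm (dv P3 t) (mm (P2 t) (P1 t)))))
     + mm (Q1 t) (mm (Q2 t) (mm (Q3 t) (mm (P3 t) (mm (dv P2 t) (P1 t)))))
     + mm (Q1 t) (mm (Q2 t) (mm (Q3 t) (mm (P3 t) (mm (P2 t) (dv P1 t)))))"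
    unfolding d1 d2 by (simp add: mm_assoc mm_add_left mm_add_right add.assoc)
  also have "\<dots> = mm (Q1 t) (mm (Q2 t) (mm (Q3 t) (mm (dv P3 t) (mm (P2 t) (P1 t)))))
     + mm (Q1 t) (mm (Q2 t) (mm (dv P2 t) (P1 t)))
     + mm (Q1 t) (dv P1 t)"
    by (simp add: c2 c3)
  also have "\<dots> = mm (mm (Q1 t) (mm (mm (Q2 t) (mm (Q3 t) (dv P3 t))) (P2 t))) (P1 t)
     + mm (mm (Q1 t) (mm (Q2 t) (dv P2 t))) (P1 t) + mm (Q1 t) (dv P1 t)"
    by (simp add: mm_assoc)
  finally show ?thesis .
qed

lemma chain_eq:
  "nz (mm (mm (opprod S n (map (\<lambda>j. Ri j t) js)) (L t)) (opprod S n (map (\<lambda>j. Rf j t) (rev js))))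
     = nz (chainZ Rf Ri L js t)"
proof (induction js)
  case Nil
  have "mm (mm (opprod S n []) (L t)) (opprod S n []) = mm (mm (nz (opprod S n [])) (L t)) (nz (opprod S n []))"
    by simp
  also have "\<dots> = nz (L t)" by (simp only: nz_opprod_Nil mm_II_left mm_II_right mm_nz_left nz_nz)
  finally show ?case by simp
next
  case (Cons j js)
  define Q where "Q = opprod S n (map (\<lambda>j. Ri j t) js)"
  define P where "P = opprod S n (map (\<lambda>j. Rf j t) (rev js))"
  have eQ: "nz (opprod S n (map (\<lambda>j. Ri j t) (j # js))) = mm (Ri j t) Q"
    unfolding Q_def by (simp add: nz_opprod_Cons)
  have eP: "nz (opprod S n (map (\<lambda>j. Rf j t) (rev (j # js)))) = mm P (Rf j t)"
  proof -
    have "nz (opprod S n (map (\<lambda>j. Rf j t) (rev (j # js)))) = mm P (opprod S n [Rf j t])"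
      unfolding P_def by (simp add: nz_opprod_append)
    also have "\<dots> = mm P (nz (opprod S n [Rf j t]))" by simp
    also have "\<dots> = mm P (Rf j t)" by (simp add: nz_opprod_single)
    finally show ?thesis .
  qed
  have "mm (mm (opprod S n (map (\<lambda>j. Ri j t) (j # js))) (L t)) (opprod S n (map (\<lambda>j. Rf j t) (rev (j # js))))
      = mm (mm (nz (opprod S n (map (\<lambda>j. Ri j t) (j # js)))) (L t)) (nz (opprod S n (map (\<lambda>j. Rf j t) (rev (j # js)))))"
    by simp
  also have "\<dots> = mm (mm (Ri j t) (mm (mm Q (L t)) P)) (Rf j t)"
    unfolding eQ eP by (simp add: mm_assoc)
  also have "\<dots> = mm (mm (Ri j t) (nz (mm (mm Q (L t)) P))) (Rf j t)" by simp
  also have "nz (mm (mm Q (L t)) P) = nz (chainZ Rf Ri L js t)" using Cons unfolding Q_def P_def .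
  also have "mm (mm (Ri j t) (nz (chainZ Rf Ri L js t))) (Rf j t) = chainZ Rf Ri L (j # js) t"
    by simp
  finally show ?case by simp
qed

lemma DD_link:
  "DD K 1 Phi (shift u K t) = dv (\<lambda>t. Phi (shift u K t)) t"
  unfolding DD_def dv_def
  by (simp add: shift_shift deriv_shift0[of "\<lambda>s. Phi (shift u K s) _ _"])

lemma Q_link:
  "nz (DD K m (\<lambda>w. opmul S n (opinv S n (Phi w)) (DD K 1 Phi w)) u)
    = dn m (\<lambda>t. mm (opinv S n (Phi (shift u K t))) (dv (\<lambda>t. Phi (shift u K t)) t))"
proof -
  have "nz (DD K m (\<lambda>w. opmul S n (opinv S n (Phi w)) (DD K 1 Phi w)) u)
     = dn m (\<lambda>t. opmul S n (opinv S n (Phi (shift u K t))) (DD K 1 Phi (shift u K t)))"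
    unfolding DD_def dn_def by simp
  also have "\<dots> = dn m (\<lambda>t. nz (opmul S n (opinv S n (Phi (shift u K t))) (DD K 1 Phi (shift u K t))))"
    by simp
  also have "\<dots> = dn m (\<lambda>t. mm (opinv S n (Phi (shift u K t))) (dv (\<lambda>t. Phi (shift u K t)) t))"
    by (simp add: opmul_mm DD_link DD_link[unfolded One_nat_def])
  finally show ?thesis .
qed

end


context ana
begin

lemma van_le: "van m E \<Longrightarrow> m' \<le> m \<Longrightarrow> van m' E"
  unfolding van_def by auto

lemma GEN:
  assumes s: "s \<in> S" and T0S: "T0 \<subseteq> S" and sT0: "s \<notin> T0"
    and hP1: "hol P1" and hQ1: "hol Q1" and hP3: "hol P3" and hQ3: "hol Q3"
    and i1: "\<And>t. t \<in> U \<Longrightarrow> mm (Q1 t) (P1 t) = II"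
    and i3: "\<And>t. t \<in> U \<Longrightarrow> mm (Q3 t) (P3 t) = II"
    and good: "\<forall>j\<in>set js. goodR s j (Rf j) (Ri j)"
    and good2: "\<And>j t. j \<in> set js \<Longrightarrow> t \<in> U \<Longrightarrow> mm (Rf j t) (Ri j t) = II"
    and dj: "distinct js" and jsT0: "set js \<subseteq> T0"
    and aL: "\<And>t. t \<in> U \<Longrightarrow> avoids T0 (mm (Q3 t) (dv P3 t))"
    and aP1: "\<And>t. t \<in> U \<Longrightarrow> avoids (S - W) (P1 t)"
    and W: "W \<subseteq> insert s (T0 - set js)" and m: "m \<le> length js"
    and M: "\<And>t. t \<in> U \<Longrightarrow> nz (M t) = mm (P3 t) (mm (opprod S n (map (\<lambda>j. Rf j t) (rev js))) (P1 t))"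
    and Minv: "\<And>t. t \<in> U \<Longrightarrow> nz (Minv t) = mm (Q1 t) (mm (opprod S n (map (\<lambda>j. Ri j t) js)) (Q3 t))"
  shows "dn m (\<lambda>t. mm (Minv t) (dv M t)) =
     mm (mm (Q1 0) (dn m (\<lambda>t. mm (mm (opprod S n (map (\<lambda>j. Ri j t) js)) (mm (Q3 t) (dv P3 t))) (opprod S n (map (\<lambda>j. Rf j t) (rev js)))))) (P1 0)
     + (dn m (\<lambda>t. mm (mm (Q1 t) (mm (opprod S n (map (\<lambda>j. Ri j t) js)) (dv (\<lambda>t. opprod S n (map (\<lambda>j. Rf j t) (rev js))) t))) (P1 t))
        + dn m (\<lambda>t. mm (Q1 t) (dv P1 t)))"
proof -
  define P2 where "P2 = (\<lambda>t. opprod S n (map (\<lambda>j. Rf j t) (rev js)))"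
  define Q2 where "Q2 = (\<lambda>t. opprod S n (map (\<lambda>j. Ri j t) js))"
  define L where "L = (\<lambda>t. mm (Q3 t) (dv P3 t))"
  define Z where "Z = (\<lambda>t. mm (mm (Q2 t) (L t)) (P2 t))"
  define T1 where "T1 = (\<lambda>t. mm (mm (Q1 t) (Z t)) (P1 t))"
  define T2 where "T2 = (\<lambda>t. mm (mm (Q1 t) (mm (Q2 t) (dv P2 t))) (P1 t))"
  define T3 where "T3 = (\<lambda>t. mm (Q1 t) (dv P1 t))"
  have gj: "hol (Rf j)" "hol (Ri j)" if "j \<in> set js" for j
    using good that unfolding goodR_def by auto
  have gi: "mm (Ri j t) (Rf j t) = II" if "j \<in> set js" "t \<in> U" for j t
    using good that unfolding goodR_def by auto
  have hP2: "hol P2" unfolding P2_def by (rule hol_opprod) (use gj in auto)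
  have hQ2: "hol Q2" unfolding Q2_def by (rule hol_opprod) (use gj in auto)
  have i2: "mm (Q2 t) (P2 t) = II" if t: "t \<in> U" for t
  proof -
    have "mm (opprod S n (map (\<lambda>j. Ri j t) (rev (rev js)))) (opprod S n (map (\<lambda>j. Rf j t) (rev js))) = II"
      using opprod_inv[of "rev js" "\<lambda>j. Ri j t" "\<lambda>j. Rf j t"] gi[OF _ t] good2[OF _ t] by auto
    then show ?thesis unfolding Q2_def P2_def by simp
  qed
  have MM: "\<And>t. t \<in> U \<Longrightarrow> nz (M t) = mm (P3 t) (mm (P2 t) (P1 t))"
    unfolding P2_def by (rule M)
  have hL: "hol L" unfolding L_def by (intro hol_mm hQ3 hol_dv hP3)
  have hZ: "hol Z" unfolding Z_def by (intro hol_mm hQ2 hL hP2)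
  have hT1: "hol T1" unfolding T1_def by (intro hol_mm hQ1 hZ hP1)
  have hT2: "hol T2" unfolding T2_def by (intro hol_mm hQ1 hQ2 hol_dv hP2 hP1)
  have hT3: "hol T3" unfolding T3_def by (intro hol_mm hQ1 hol_dv hP1)
  have "dn m (\<lambda>t. mm (Minv t) (dv M t)) = dn m (\<lambda>t. T1 t + T2 t + T3 t)"
  proof (rule dn_cong)
    fix t assume t: "t \<in> U"
    have "mm (Minv t) (dv M t) = mm (nz (Minv t)) (dv M t)" by simp
    also have "\<dots> = mm (mm (Q1 t) (mm (Q2 t) (Q3 t))) (dv M t)" using Minv[OF t] unfolding Q2_def by simp
    also have "\<dots> = T1 t + T2 t + T3 t"
      unfolding T1_def T2_def T3_def Z_def L_def
      by (rule three_factor[OF hP1 hP2 hP3 i1 i2 i3 MM t])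
    finally show "nz (mm (Minv t) (dv M t)) = nz (T1 t + T2 t + T3 t)" by simp
  qed
  also have "\<dots> = dn m T1 + dn m T2 + dn m T3"
    by (simp only: dn_add[OF hol_add[OF hT1 hT2] hT3] dn_add[OF hT1 hT2])
  also have "dn m T1 = mm (mm (Q1 0) (dn m Z)) (P1 0)"
  proof -
    have aL': "\<And>t. t \<in> U \<Longrightarrow> avoids T0 (L t)" using aL unfolding L_def .
    obtain Y E where hY: "hol Y" and hE: "hol E"
      and ZYE: "\<forall>t\<in>U. nz (chainZ Rf Ri L js t) = nz (Y t + E t)"
      and aY: "\<forall>t\<in>U. avoids (insert s (T0 - set js)) (Y t)"
      and vE: "van (length js) E"
      using chain_lemma[OF s T0S sT0 hL aL' dj jsT0 good] by metis
    have ZYE': "nz (Z t) = nz (Y t + E t)" if t: "t \<in> U" for t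
      using chain_eq[of Ri t js L Rf] ZYE t unfolding Z_def Q2_def P2_def by simp
    have aY': "avoids W (Y t)" if t: "t \<in> U" for t
      using avoids_mono[OF W] aY t by blast
    show ?thesis unfolding T1_def
      by (rule core_final[OF hP1 hQ1 i1 aP1 hY hE ZYE' aY' van_le[OF vE m]])
  qed
  finally show ?thesis unfolding T2_def T3_def Z_def L_def Q2_def P2_def by (simp only: add.assoc)
qed

end


lemma mm_uminus_left: "ops S n \<Longrightarrow> ops.mm S n (- A) B = - ops.mm S n A B"
  by (simp add: ops.mm_def ops.nz_def opmul_def fun_eq_iff sum_negf)

locale conc = ops S n for S n +
  fixes r :: real and R :: "complex \<Rightarrow> complex \<Rightarrow> nat \<times> nat \<Rightarrow> nat \<times> nat \<Rightarrow> complex"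
    and u :: "nat \<Rightarrow> complex"
  assumes an: "analytic_R n r R"
    and reg: "\<And>p q. fst p < n \<Longrightarrow> snd p < n \<Longrightarrow> fst q < n \<Longrightarrow> snd q < n \<Longrightarrow>
      R 0 0 p q = (if fst p = snd q \<and> snd p = fst q then 1 else 0)"
    and U2: "\<And>v w a b a' b'. norm v < r \<Longrightarrow> norm w < r \<Longrightarrow> a < n \<Longrightarrow> b < n \<Longrightarrow> a' < n \<Longrightarrow> b' < n \<Longrightarrow>
      (\<Sum>c<n. \<Sum>e<n. R v w (a, b) (c, e) * R w v (e, c) (b', a')) = (if a = a' \<and> b = b' then 1 else 0)"
    and uS: "\<And>l. l \<in> S \<Longrightarrow> norm (u l) < r"
begin

lemma rpos: "0 < r" using an by (simp add: analytic_R_def)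

sublocale ana S n "ball 0 r"
  by unfold_locales (auto simp: rpos)

lemma norm_shift:
  assumes "u s = 0" "t \<in> ball 0 r" "l \<in> S"
  shows "norm (shift u [s] t l) < r"
  using assms uS by (auto simp: shift_def)

lemma hol_Rop:
  assumes s: "u s = 0" and i: "i \<in> S" and j: "j \<in> S" and ij: "i \<noteq> j"
  shows "hol (\<lambda>t. Rop R i j (shift u [s] t))"
  unfolding hol_def
proof (intro ballI)
  fix x y assume x: "x \<in> C" and y: "y \<in> C"
  have lt: "x i < n" "x j < n" "y i < n" "y j < n" using x y i j by (auto simp: cfgs_def)
  define ind where "ind = (if (\<forall>l. l \<noteq> i \<longrightarrow> l \<noteq> j \<longrightarrow> x l = y l) then 1 else (0::complex))"
  have e: "(\<lambda>t. Rop R i j (shift u [s] t) x y) =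
     (\<lambda>t. R (if i = s then t else u i) (if j = s then t else u j) (x i, x j) (y i, y j) * ind)"
    using s by (auto simp: Rop_def shift_def ind_def fun_eq_iff)
  have "(\<lambda>t. R (if i = s then t else u i) (if j = s then t else u j) (x i, x j) (y i, y j)) holomorphic_on ball 0 r"
  proof (cases "i = s")
    case True
    then have "j \<noteq> s" using ij by simp
    then show ?thesis using True analytic_R_hol(1)[OF an uS[OF j], of "(x i, x j)" "(y i, y j)"] lt by simp
  next
    case False
    show ?thesis
    proof (cases "j = s")
      case True
      then show ?thesis using False analytic_R_hol(2)[OF an uS[OF i], of "(x i, x j)" "(y i, y j)"] lt by simp
    next
      case False2: False
      then show ?thesis using False by (simp add: holomorphic_on_const)
    qed
  qed
  then show "(\<lambda>t. Rop R i j (shift u [s] t) x y) holomorphic_on ball 0 r"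
    unfolding e by (intro holomorphic_intros)
qed

lemma inv_Rop:
  assumes s: "u s = 0" and i: "i \<in> S" and j: "j \<in> S" and ij: "i \<noteq> j" and t: "t \<in> ball 0 r"
  shows "mm (Rop R i j (shift u [s] t)) (Rop R j i (shift u [s] t)) = II"
  by (rule Rop_inv[OF i j ij]) (rule U2[OF norm_shift[OF s t i] norm_shift[OF s t j]])

lemma good_Rop:
  assumes sS: "s \<in> S" and j: "j \<in> S" and sj: "s \<noteq> j" and us: "u s = 0" and uj: "u j = 0"
  shows "goodR s j (\<lambda>t. Rop R s j (shift u [s] t)) (\<lambda>t. Rop R j s (shift u [s] t))"
    and "goodR s j (\<lambda>t. Rop R j s (shift u [s] t)) (\<lambda>t. Rop R s j (shift u [s] t))"
proof -
  have e: "{s, j} = {j, s}" by auto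
  have P1: "nz (Rop R s j (shift u [s] 0)) = nz (Psw s j)"
    by (rule Rop_Psw[OF sS j sj]) (use us uj sj in \<open>simp_all add: reg\<close>)
  have P2: "nz (Rop R j s (shift u [s] 0)) = nz (Psw s j)"
    using Rop_Psw[OF j sS sj[symmetric], of "shift u [s] 0" R] us uj sj reg Psw_sym[OF sj] by simp
  show "goodR s j (\<lambda>t. Rop R s j (shift u [s] t)) (\<lambda>t. Rop R j s (shift u [s] t))"
    unfolding goodR_def
    using hol_Rop[OF us sS j sj] hol_Rop[OF us j sS sj[symmetric]] inv_Rop[OF us j sS sj[symmetric]]
      avoids_Rop[of s j R] avoids_Rop[of j s R] P1 P2 e by auto
  show "goodR s j (\<lambda>t. Rop R j s (shift u [s] t)) (\<lambda>t. Rop R s j (shift u [s] t))"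
    unfolding goodR_def
    using hol_Rop[OF us sS j sj] hol_Rop[OF us j sS sj[symmetric]] inv_Rop[OF us sS j sj]
      avoids_Rop[of s j R] avoids_Rop[of j s R] P1 P2 e by auto
qed

definition F1 :: "nat list \<Rightarrow> complex \<Rightarrow> sop" where
  "F1 xs = (\<lambda>t. opprod S n (map (\<lambda>j. Rop R 1 j (shift u [1] t)) (rev xs)))"
definition G1 :: "nat list \<Rightarrow> complex \<Rightarrow> sop" where
  "G1 xs = (\<lambda>t. opprod S n (map (\<lambda>j. Rop R j 1 (shift u [1] t)) xs))"
definition Zt1 :: "nat \<Rightarrow> nat list \<Rightarrow> sop" where
  "Zt1 k b' = dn (k - 2) (\<lambda>t. mm (mm (G1 [2..<k] t) (mm (G1 b' t) (dv (F1 b') t))) (F1 [2..<k] t))"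
definition Kt1 :: "nat \<Rightarrow> nat list \<Rightarrow> sop" where
  "Kt1 k a' = dn (k - 2) (\<lambda>t. mm (mm (G1 a' t) (mm (G1 [2..<k] t) (dv (F1 [2..<k]) t))) (F1 a' t))
     + dn (k - 2) (\<lambda>t. mm (G1 a' t) (dv (F1 a') t))"

lemma nz_opprod_append3: "nz (opprod S n (A @ B @ D)) = mm (opprod S n A) (mm (opprod S n B) (opprod S n D))"
proof -
  have "nz (opprod S n (A @ B @ D)) = mm (opprod S n A) (opprod S n (B @ D))"
    by (rule nz_opprod_append)
  also have "\<dots> = mm (opprod S n A) (nz (opprod S n (B @ D)))" by simp
  also have "nz (opprod S n (B @ D)) = mm (opprod S n B) (opprod S n D)"
    by (rule nz_opprod_append)
  finally show ?thesis .
qed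

lemma eq1_J:
  assumes k: "2 \<le> k" and S1k: "{1..k} \<subseteq> S" and u0: "\<And>i. i \<in> {1..k} \<Longrightarrow> u i = 0"
    and aS: "set a' \<subseteq> S" and bS: "set b' \<subseteq> S" and da: "distinct a'" and db: "distinct b'"
    and a1k: "set a' \<inter> {1..k} = {}" and b1k: "set b' \<inter> {1..k} = {}" and ab: "set a' \<inter> set b' = {}"
  shows "nz (Qk R S n k [1] (a' @ [2..<k] @ b') u) = mm (mm (G1 a' 0) (Zt1 k b')) (F1 a' 0) + Kt1 k a'"
proof -
  define c where "c = [2..<k]"
  define J where "J = a' @ c @ b'"
  define f where "f = (\<lambda>j t. Rop R 1 j (shift u [1] t))"
  define g where "g = (\<lambda>j t. Rop R j 1 (shift u [1] t))"
  define M where "M = (\<lambda>t. RIJ R S n [1] J (shift u [1] t))"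
  define Minv where "Minv = (\<lambda>t. opprod S n (map (\<lambda>j. g j t) J))"
  have oneS: "1 \<in> S" using S1k k by auto
  have u1: "u 1 = 0" using u0 k by auto
  have cS: "set c \<subseteq> S" "1 \<notin> set c" using S1k by (auto simp: c_def)
  have JS: "j \<in> S" "j \<noteq> 1" if "j \<in> set J" for j
    using that aS bS cS a1k b1k k by (auto simp: J_def)
  have hf: "hol (f j)" "hol (g j)" if "j \<in> S" "j \<noteq> 1" for j
    unfolding f_def g_def using hol_Rop[OF u1 oneS that(1)] hol_Rop[OF u1 that(1) oneS] that by auto
  have fg: "mm (g j t) (f j t) = II \<and> mm (f j t) (g j t) = II" if "j \<in> S" "j \<noteq> 1" "t \<in> ball 0 r" for j and t :: complex
    unfolding f_def g_def using inv_Rop[OF u1 oneS that(1)] inv_Rop[OF u1 that(1) oneS] that by auto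
  have hF: "hol (F1 xs)" "hol (G1 xs)" if "set xs \<subseteq> S" "1 \<notin> set xs" for xs
  proof -
    show "hol (F1 xs)" unfolding F1_def using hol_opprod[of "rev xs" f] hf that by (auto simp: f_def)
    show "hol (G1 xs)" unfolding G1_def using hol_opprod[of xs g] hf that by (auto simp: g_def)
  qed
  have invF: "mm (G1 xs t) (F1 xs t) = II \<and> mm (F1 xs t) (G1 xs t) = II"
    if "set xs \<subseteq> S" "1 \<notin> set xs" "t \<in> ball 0 r" for xs and t :: complex
    using opprod_inv[of "rev xs" "\<lambda>j. g j t" "\<lambda>j. f j t"] fg[OF _ _ that(3)] that(1,2)
    unfolding F1_def G1_def f_def g_def by auto
  have nzM: "nz (M t) = mm (F1 b' t) (mm (F1 c t) (F1 a' t))" for t :: complex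
  proof -
    have "nz (M t) = nz (opprod S n (map (\<lambda>j. f j t) (rev J)))"
      unfolding M_def RIJ_def f_def by (simp add: nz_opprod_single)
    also have "\<dots> = mm (F1 b' t) (mm (F1 c t) (F1 a' t))"
      unfolding J_def F1_def f_def by (simp add: nz_opprod_append3)
    finally show ?thesis .
  qed
  have nzMinv: "nz (Minv t) = mm (G1 a' t) (mm (G1 c t) (G1 b' t))" for t :: complex
    unfolding Minv_def J_def G1_def g_def by (simp add: nz_opprod_append3)
  have opinvM: "nz (opinv S n (M t)) = nz (Minv t)" if t: "t \<in> ball 0 r" for t :: complex
  proof (rule opinv_unique)
    have "mm (opprod S n (map (\<lambda>j. g j t) (rev (rev J)))) (opprod S n (map (\<lambda>j. f j t) (rev J))) = II
       \<and> mm (opprod S n (map (\<lambda>j. f j t) (rev J))) (opprod S n (map (\<lambda>j. g j t) (rev (rev J)))) = II"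
      by (rule opprod_inv) (use fg[OF _ _ t] JS in auto)
    moreover have "nz (M t) = nz (opprod S n (map (\<lambda>j. f j t) (rev J)))"
      unfolding M_def RIJ_def f_def by (simp add: nz_opprod_single)
    ultimately show "mm (M t) (Minv t) = II" "mm (Minv t) (M t) = II"
      unfolding Minv_def by (metis mm_nz_left mm_nz_right rev_rev_ident)+
  qed
  have "nz (Qk R S n k [1] J u) = dn (k - 2) (\<lambda>t. mm (opinv S n (M t)) (dv M t))"
    unfolding Qk_def M_def by (rule Q_link)
  also have "\<dots> = dn (k - 2) (\<lambda>t. mm (Minv t) (dv M t))"
  proof (rule dn_cong)
    fix t :: complex assume t: "t \<in> ball 0 r"
    have "mm (opinv S n (M t)) (dv M t) = mm (nz (opinv S n (M t))) (dv M t)" by simp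
    also have "\<dots> = mm (Minv t) (dv M t)" using opinvM[OF t] by simp
    finally show "nz (mm (opinv S n (M t)) (dv M t)) = nz (mm (Minv t) (dv M t))" by simp
  qed
  also have "\<dots> = mm (mm (G1 a' 0) (Zt1 k b')) (F1 a' 0) + Kt1 k a'"
  proof -
    define T0 where "T0 = S - insert 1 (set b')"
    define W where "W = insert 1 (set a')"
    have b'ok: "set b' \<subseteq> S" "1 \<notin> set b'" and a'ok: "set a' \<subseteq> S" "1 \<notin> set a'"
      using aS bS a1k b1k k by auto
    have cT0: "set c \<subseteq> T0" using cS b1k by (auto simp: T0_def c_def)
    have av1: "avoids T (f j t)" "avoids T (g j t)" if "T \<subseteq> S - {1, j}" for T j and t :: complex
    proof -
      have "avoids (S - {1, j}) (Rop R 1 j (shift u [1] t))" by (rule avoids_Rop)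
      moreover have "avoids (S - {1, j}) (Rop R j 1 (shift u [1] t))"
        using avoids_Rop[of j 1 R "shift u [1] t"] by (simp add: insert_commute)
      ultimately show "avoids T (f j t)" "avoids T (g j t)"
        using avoids_mono[OF that] unfolding f_def g_def by auto
    qed
    have aF: "avoids T (F1 xs t)" "avoids T (G1 xs t)" if "\<And>j. j \<in> set xs \<Longrightarrow> T \<subseteq> S - {1, j}" for T xs and t :: complex
      unfolding F1_def G1_def using avoids_opprod[of "rev xs" T "\<lambda>j. f j t"] avoids_opprod[of xs T "\<lambda>j. g j t"]
        av1 that unfolding f_def g_def by auto
    have aL: "avoids T0 (mm (G1 b' t) (dv (F1 b') t))" if t: "t \<in> ball 0 r" for t :: complex
    proof (rule avoids_mm)
      show "avoids T0 (G1 b' t)" by (rule aF(2)) (auto simp: T0_def)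
      show "avoids T0 (dv (F1 b') t)" by (rule avoids_dv[OF _ t]) (rule aF(1), auto simp: T0_def)
    qed
    have aP1: "avoids (S - W) (F1 a' t)" for t :: complex by (rule aF(1)) (auto simp: W_def)
    have W: "W \<subseteq> insert 1 (T0 - set c)" using aS ab a1k by (auto simp: W_def T0_def c_def)
    have good: "\<forall>j\<in>set c. goodR 1 j (f j) (g j)"
    proof
      fix j assume j: "j \<in> set c"
      then have "j \<in> S" "1 \<noteq> j" "u j = 0" using cS u0 by (auto simp: c_def)
      then show "goodR 1 j (f j) (g j)" unfolding f_def g_def by (intro good_Rop(1)[OF oneS _ _ u1]) auto
    qed
    have G: "dn (k - 2) (\<lambda>t. mm (Minv t) (dv M t)) =
     mm (mm (G1 a' 0) (dn (k - 2) (\<lambda>t. mm (mm (opprod S n (map (\<lambda>j. g j t) c)) (mm (G1 b' t) (dv (F1 b') t))) (opprod S n (map (\<lambda>j. f j t) (rev c)))))) (F1 a' 0)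
     + (dn (k - 2) (\<lambda>t. mm (mm (G1 a' t) (mm (opprod S n (map (\<lambda>j. g j t) c)) (dv (\<lambda>t. opprod S n (map (\<lambda>j. f j t) (rev c))) t))) (F1 a' t))
        + dn (k - 2) (\<lambda>t. mm (G1 a' t) (dv (F1 a') t)))"
    proof (rule GEN[OF oneS _ _ hF(1)[OF a'ok] hF(2)[OF a'ok] hF(1)[OF b'ok] hF(2)[OF b'ok]])
      show "T0 \<subseteq> S" "1 \<notin> T0" by (auto simp: T0_def)
      show "\<And>t. t \<in> ball 0 r \<Longrightarrow> mm (G1 a' t) (F1 a' t) = II" using invF a'ok by blast
      show "\<And>t. t \<in> ball 0 r \<Longrightarrow> mm (G1 b' t) (F1 b' t) = II" using invF b'ok by blast
      show "\<forall>j\<in>set c. goodR 1 j (f j) (g j)" by (rule good)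
      show "\<And>j t. j \<in> set c \<Longrightarrow> t \<in> ball 0 r \<Longrightarrow> mm (f j t) (g j t) = II" using fg cS by blast
      show "distinct c" by (simp add: c_def)
      show "set c \<subseteq> T0" by (rule cT0)
      show "\<And>t. t \<in> ball 0 r \<Longrightarrow> avoids T0 (mm (G1 b' t) (dv (F1 b') t))" by (rule aL)
      show "\<And>t. t \<in> ball 0 r \<Longrightarrow> avoids (S - W) (F1 a' t)" by (rule aP1)
      show "W \<subseteq> insert 1 (T0 - set c)" by (rule W)
      show "k - 2 \<le> length c" by (simp add: c_def)
      show "\<And>t. t \<in> ball 0 r \<Longrightarrow> nz (M t) = mm (F1 b' t) (mm (opprod S n (map (\<lambda>j. f j t) (rev c))) (F1 a' t))"
        using nzM unfolding F1_def f_def by simp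
      show "\<And>t. t \<in> ball 0 r \<Longrightarrow> nz (Minv t) = mm (G1 a' t) (mm (opprod S n (map (\<lambda>j. g j t) c)) (G1 b' t))"
        using nzMinv unfolding G1_def g_def by simp
    qed
    have e1: "(\<lambda>t. opprod S n (map (\<lambda>j. g j t) c)) = G1 c" unfolding G1_def g_def ..
    have e2: "(\<lambda>t. opprod S n (map (\<lambda>j. f j t) (rev c))) = F1 c" unfolding F1_def f_def ..
    have e1': "opprod S n (map (\<lambda>j. g j t) c) = G1 c t" for t unfolding G1_def g_def ..
    have e2': "opprod S n (map (\<lambda>j. f j t) (rev c)) = F1 c t" for t unfolding F1_def f_def ..
    show ?thesis unfolding G Zt1_def Kt1_def c_def[symmetric]
      by (simp only: e1 e2 e1' e2' add.assoc)
  qed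
  finally show ?thesis unfolding J_def c_def .
qed

definition F2 :: "nat \<Rightarrow> nat list \<Rightarrow> complex \<Rightarrow> sop" where
  "F2 k xs = (\<lambda>t. opprod S n (map (\<lambda>j. Rop R j k (shift u [k] t)) xs))"
definition G2 :: "nat \<Rightarrow> nat list \<Rightarrow> complex \<Rightarrow> sop" where
  "G2 k xs = (\<lambda>t. opprod S n (map (\<lambda>j. Rop R k j (shift u [k] t)) (rev xs)))"
definition Zt2 :: "nat \<Rightarrow> nat list \<Rightarrow> sop" where
  "Zt2 k a' = dn (k - 2) (\<lambda>t. mm (mm (G2 k [1..<k] t) (mm (G2 k a' t) (dv (F2 k a') t))) (F2 k [1..<k] t))"
definition Kt2 :: "nat \<Rightarrow> nat list \<Rightarrow> sop" where
  "Kt2 k b' = dn (k - 2) (\<lambda>t. mm (mm (G2 k b' t) (mm (G2 k [1..<k] t) (dv (F2 k [1..<k]) t))) (F2 k b' t))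
     + dn (k - 2) (\<lambda>t. mm (G2 k b' t) (dv (F2 k b') t))"

lemma eq2_J:
  assumes k: "2 \<le> k" and S1k: "{1..k} \<subseteq> S" and u0: "\<And>i. i \<in> {1..k} \<Longrightarrow> u i = 0"
    and aS: "set a' \<subseteq> S" and bS: "set b' \<subseteq> S" and da: "distinct a'" and db: "distinct b'"
    and a1k: "set a' \<inter> {1..k} = {}" and b1k: "set b' \<inter> {1..k} = {}" and ab: "set a' \<inter> set b' = {}"
  shows "nz (Qtk R S n k (a' @ [1..<k] @ b') [k] u) = - (mm (mm (G2 k b' 0) (Zt2 k a')) (F2 k b' 0) + Kt2 k b')"
proof -
  define c where "c = [1..<k]"
  define I where "I = a' @ c @ b'"
  define f where "f = (\<lambda>j t. Rop R j k (shift u [k] t))"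
  define g where "g = (\<lambda>j t. Rop R k j (shift u [k] t))"
  define M where "M = (\<lambda>t. RIJ R S n I [k] (shift u [k] t))"
  define Minv where "Minv = (\<lambda>t. opprod S n (map (\<lambda>j. g j t) (rev I)))"
  have kS: "k \<in> S" using S1k k by auto
  have uk: "u k = 0" using u0 k by auto
  have cS: "set c \<subseteq> S" "k \<notin> set c" using S1k by (auto simp: c_def)
  have IS: "j \<in> S" "j \<noteq> k" if "j \<in> set I" for j
    using that aS bS cS a1k b1k k by (auto simp: I_def)
  have hf: "hol (f j)" "hol (g j)" if "j \<in> S" "j \<noteq> k" for j
    unfolding f_def g_def using hol_Rop[OF uk kS that(1)] hol_Rop[OF uk that(1) kS] that by auto
  have fg: "mm (g j t) (f j t) = II \<and> mm (f j t) (g j t) = II" if "j \<in> S" "j \<noteq> k" "t \<in> ball 0 r" for j and t :: complex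
    unfolding f_def g_def using inv_Rop[OF uk kS that(1)] inv_Rop[OF uk that(1) kS] that by auto
  have hF: "hol (F2 k xs)" "hol (G2 k xs)" if "set xs \<subseteq> S" "k \<notin> set xs" for xs
  proof -
    show "hol (F2 k xs)" unfolding F2_def using hol_opprod[of xs f] hf that by (auto simp: f_def)
    show "hol (G2 k xs)" unfolding G2_def using hol_opprod[of "rev xs" g] hf that by (auto simp: g_def)
  qed
  have invF: "mm (G2 k xs t) (F2 k xs t) = II \<and> mm (F2 k xs t) (G2 k xs t) = II"
    if "set xs \<subseteq> S" "k \<notin> set xs" "t \<in> ball 0 r" for xs and t :: complex
    using opprod_inv[of xs "\<lambda>j. g j t" "\<lambda>j. f j t"] fg[OF _ _ that(3)] that(1,2)
    unfolding F2_def G2_def f_def g_def by auto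
  have nzM0: "nz (M t) = nz (opprod S n (map (\<lambda>j. f j t) I))" for t :: complex
    unfolding M_def RIJ_def f_def by (rule nz_opprod_cong) (simp add: nz_opprod_single)
  have nzM: "nz (M t) = mm (F2 k a' t) (mm (F2 k c t) (F2 k b' t))" for t :: complex
    unfolding nzM0 I_def F2_def f_def by (simp add: nz_opprod_append3)
  have nzMinv: "nz (Minv t) = mm (G2 k b' t) (mm (G2 k c t) (G2 k a' t))" for t :: complex
    unfolding Minv_def I_def G2_def g_def by (simp add: nz_opprod_append3)
  have opinvM: "nz (opinv S n (M t)) = nz (Minv t)" if t: "t \<in> ball 0 r" for t :: complex
  proof (rule opinv_unique)
    have "mm (opprod S n (map (\<lambda>j. g j t) (rev I))) (opprod S n (map (\<lambda>j. f j t) I)) = II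
       \<and> mm (opprod S n (map (\<lambda>j. f j t) I)) (opprod S n (map (\<lambda>j. g j t) (rev I))) = II"
      by (rule opprod_inv) (use fg[OF _ _ t] IS in auto)
    then show "mm (M t) (Minv t) = II" "mm (Minv t) (M t) = II"
      unfolding Minv_def using nzM0[of t] by (metis mm_nz_left mm_nz_right)+
  qed
  have "nz (Qtk R S n k I [k] u) = - nz (DD [k] (k - 2)
     (\<lambda>w. opmul S n (opinv S n (RIJ R S n I [k] w)) (DD [k] 1 (RIJ R S n I [k]) w)) u)"
    unfolding Qtk_def opneg_def by (simp add: nz_def fun_eq_iff)
  also have "nz (DD [k] (k - 2)
     (\<lambda>w. opmul S n (opinv S n (RIJ R S n I [k] w)) (DD [k] 1 (RIJ R S n I [k]) w)) u)
     = dn (k - 2) (\<lambda>t. mm (opinv S n (M t)) (dv M t))"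
    unfolding M_def by (rule Q_link)
  also have "dn (k - 2) (\<lambda>t. mm (opinv S n (M t)) (dv M t)) = dn (k - 2) (\<lambda>t. mm (Minv t) (dv M t))"
  proof (rule dn_cong)
    fix t :: complex assume t: "t \<in> ball 0 r"
    have "mm (opinv S n (M t)) (dv M t) = mm (nz (opinv S n (M t))) (dv M t)" by simp
    also have "\<dots> = mm (Minv t) (dv M t)" using opinvM[OF t] by simp
    finally show "nz (mm (opinv S n (M t)) (dv M t)) = nz (mm (Minv t) (dv M t))" by simp
  qed
  also have "dn (k - 2) (\<lambda>t. mm (Minv t) (dv M t)) = mm (mm (G2 k b' 0) (Zt2 k a')) (F2 k b' 0) + Kt2 k b'"
  proof -
    define T0 where "T0 = S - insert k (set a')"
    define W where "W = insert k (set b')"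
    have b'ok: "set b' \<subseteq> S" "k \<notin> set b'" and a'ok: "set a' \<subseteq> S" "k \<notin> set a'"
      using aS bS a1k b1k k by auto
    have cT0: "set (rev c) \<subseteq> T0" using cS a1k by (auto simp: T0_def c_def)
    have av1: "avoids T (f j t)" "avoids T (g j t)" if "T \<subseteq> S - {k, j}" for T j and t :: complex
    proof -
      have "avoids (S - {k, j}) (Rop R k j (shift u [k] t))" by (rule avoids_Rop)
      moreover have "avoids (S - {k, j}) (Rop R j k (shift u [k] t))"
        using avoids_Rop[of j k R "shift u [k] t"] by (simp add: insert_commute)
      ultimately show "avoids T (f j t)" "avoids T (g j t)"
        using avoids_mono[OF that] unfolding f_def g_def by auto
    qed
    have aF: "avoids T (F2 k xs t)" "avoids T (G2 k xs t)" if "\<And>j. j \<in> set xs \<Longrightarrow> T \<subseteq> S - {k, j}" for T xs and t :: complex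
      unfolding F2_def G2_def using avoids_opprod[of xs T "\<lambda>j. f j t"] avoids_opprod[of "rev xs" T "\<lambda>j. g j t"]
        av1 that unfolding f_def g_def by auto
    have aL: "avoids T0 (mm (G2 k a' t) (dv (F2 k a') t))" if t: "t \<in> ball 0 r" for t :: complex
    proof (rule avoids_mm)
      show "avoids T0 (G2 k a' t)" by (rule aF(2)) (auto simp: T0_def)
      show "avoids T0 (dv (F2 k a') t)" by (rule avoids_dv[OF _ t]) (rule aF(1), auto simp: T0_def)
    qed
    have aP1: "avoids (S - W) (F2 k b' t)" for t :: complex by (rule aF(1)) (auto simp: W_def)
    have W: "W \<subseteq> insert k (T0 - set (rev c))" using bS ab b1k by (auto simp: W_def T0_def c_def)
    have good: "\<forall>j\<in>set (rev c). goodR k j (f j) (g j)"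
    proof
      fix j assume j: "j \<in> set (rev c)"
      then have "j \<in> S" "k \<noteq> j" "u j = 0" using cS u0 by (auto simp: c_def)
      then show "goodR k j (f j) (g j)" unfolding f_def g_def by (intro good_Rop(2)[OF kS _ _ uk]) auto
    qed
    have G: "dn (k - 2) (\<lambda>t. mm (Minv t) (dv M t)) =
     mm (mm (G2 k b' 0) (dn (k - 2) (\<lambda>t. mm (mm (opprod S n (map (\<lambda>j. g j t) (rev c))) (mm (G2 k a' t) (dv (F2 k a') t))) (opprod S n (map (\<lambda>j. f j t) (rev (rev c))))))) (F2 k b' 0)
     + (dn (k - 2) (\<lambda>t. mm (mm (G2 k b' t) (mm (opprod S n (map (\<lambda>j. g j t) (rev c))) (dv (\<lambda>t. opprod S n (map (\<lambda>j. f j t) (rev (rev c)))) t))) (F2 k b' t))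
        + dn (k - 2) (\<lambda>t. mm (G2 k b' t) (dv (F2 k b') t)))"
    proof (rule GEN[OF kS _ _ hF(1)[OF b'ok] hF(2)[OF b'ok] hF(1)[OF a'ok] hF(2)[OF a'ok]])
      show "T0 \<subseteq> S" "k \<notin> T0" by (auto simp: T0_def)
      show "\<And>t. t \<in> ball 0 r \<Longrightarrow> mm (G2 k b' t) (F2 k b' t) = II" using invF b'ok by blast
      show "\<And>t. t \<in> ball 0 r \<Longrightarrow> mm (G2 k a' t) (F2 k a' t) = II" using invF a'ok by blast
      show "\<forall>j\<in>set (rev c). goodR k j (f j) (g j)" by (rule good)
      show "\<And>j t. j \<in> set (rev c) \<Longrightarrow> t \<in> ball 0 r \<Longrightarrow> mm (f j t) (g j t) = II" using fg cS by auto
      show "distinct (rev c)" by (simp add: c_def)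
      show "set (rev c) \<subseteq> T0" by (rule cT0)
      show "\<And>t. t \<in> ball 0 r \<Longrightarrow> avoids T0 (mm (G2 k a' t) (dv (F2 k a') t))" by (rule aL)
      show "\<And>t. t \<in> ball 0 r \<Longrightarrow> avoids (S - W) (F2 k b' t)" by (rule aP1)
      show "W \<subseteq> insert k (T0 - set (rev c))" by (rule W)
      show "k - 2 \<le> length (rev c)" by (simp add: c_def)
      show "\<And>t. t \<in> ball 0 r \<Longrightarrow> nz (M t) = mm (F2 k a' t) (mm (opprod S n (map (\<lambda>j. f j t) (rev (rev c)))) (F2 k b' t))"
        using nzM unfolding F2_def f_def by simp
      show "\<And>t. t \<in> ball 0 r \<Longrightarrow> nz (Minv t) = mm (G2 k b' t) (mm (opprod S n (map (\<lambda>j. g j t) (rev c))) (G2 k a' t))"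
        using nzMinv unfolding G2_def g_def by simp
    qed
    have e1: "(\<lambda>t. opprod S n (map (\<lambda>j. g j t) (rev c))) = G2 k c" unfolding G2_def g_def ..
    have e2: "(\<lambda>t. opprod S n (map (\<lambda>j. f j t) (rev (rev c)))) = F2 k c" unfolding F2_def f_def by simp
    have e1': "opprod S n (map (\<lambda>j. g j t) (rev c)) = G2 k c t" for t unfolding G2_def g_def ..
    have e2': "opprod S n (map (\<lambda>j. f j t) (rev (rev c))) = F2 k c t" for t unfolding F2_def f_def by simp
    show ?thesis unfolding G Zt2_def Kt2_def c_def[symmetric]
      by (simp only: e1 e2 e1' e2' add.assoc)
  qed
  finally show ?thesis unfolding I_def c_def .
qed

lemma nz_opsub: "nz (opsub X Y) = nz X - nz Y"
  by (simp add: opsub_def nz_def fun_eq_iff)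

lemma nz_conjop: "nz (conjop S n A X) = mm (mm (nz (opinv S n A)) (nz X)) (nz A)"
proof -
  have "nz (conjop S n A X) = mm (opmul S n (opinv S n A) X) A"
    unfolding conjop_def by (rule opmul_mm)
  also have "\<dots> = mm (nz (opmul S n (opinv S n A) X)) A" by simp
  also have "nz (opmul S n (opinv S n A) X) = mm (opinv S n A) X" by (rule opmul_mm)
  finally show ?thesis by simp
qed

lemma G1_Nil: "G1 [] t = opid" unfolding G1_def by (simp add: opprod_def)
lemma F1_Nil: "F1 [] t = opid" unfolding F1_def by (simp add: opprod_def)
lemma G2_Nil: "G2 k [] t = opid" unfolding G2_def by (simp add: opprod_def)
lemma F2_Nil: "F2 k [] t = opid" unfolding F2_def by (simp add: opprod_def)

lemma final1:
  assumes k: "2 \<le> k" and S1k: "{1..k} \<subseteq> S" and u0: "\<And>i. i \<in> {1..k} \<Longrightarrow> u i = 0"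
    and aS: "set a \<subseteq> S" and bS: "set b \<subseteq> S" and dist: "distinct (a @ b)"
    and disj: "set (a @ b) \<inter> {1..k} = {}"
  shows "op_eq S n
       (opsub (Qk R S n k [1] (a @ [2..<k] @ b) u)
              (conjop S n (RIJ R S n [1] a u) (Qk R S n k [1] ([2..<k] @ b) u)))
       (opsub (Qk R S n k [1] (a @ [2..<k]) u)
              (conjop S n (RIJ R S n [1] a u) (Qk R S n k [1] [2..<k] u)))"
proof -
  have da: "distinct a" and db: "distinct b" and ab: "set a \<inter> set b = {}" using dist by auto
  have a1k: "set a \<inter> {1..k} = {}" and b1k: "set b \<inter> {1..k} = {}" using disj by auto
  have nS: "set [] \<subseteq> S" "distinct []" "set [] \<inter> {1..k} = {}" "set [] \<inter> X = {}" "X \<inter> set [] = {}" for X :: "nat set" by auto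
  have Qab: "nz (Qk R S n k [1] (a @ [2..<k] @ b) u) = mm (mm (G1 a 0) (Zt1 k b)) (F1 a 0) + Kt1 k a"
    by (rule eq1_J[OF k S1k u0 aS bS da db a1k b1k ab])
  have Q0b: "nz (Qk R S n k [1] ([2..<k] @ b) u) = Zt1 k b + Kt1 k []"
    using eq1_J[OF k S1k u0 nS(1) bS nS(2) db nS(3) b1k nS(4)] by (simp add: G1_Nil F1_Nil Zt1_def)
  have Qa0: "nz (Qk R S n k [1] (a @ [2..<k]) u) = mm (mm (G1 a 0) (Zt1 k [])) (F1 a 0) + Kt1 k a"
    using eq1_J[OF k S1k u0 aS nS(1) da nS(2) a1k nS(3) nS(5)] by simp
  have Q00: "nz (Qk R S n k [1] [2..<k] u) = Zt1 k [] + Kt1 k []"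
    using eq1_J[OF k S1k u0 nS(1) nS(1) nS(2) nS(2) nS(3) nS(3) nS(4)] by (simp add: G1_Nil F1_Nil Zt1_def)
  have oneS: "1 \<in> S" using S1k k by auto
  have u1: "u 1 = 0" using u0 k by auto
  have aok: "j \<in> S" "j \<noteq> 1" if "j \<in> set a" for j using that aS a1k k by auto
  have h0: "mm (Rop R x 1 u) (Rop R 1 x u) = II \<and> mm (Rop R 1 x u) (Rop R x 1 u) = II"
    if "x \<in> set (rev a)" for x
    using inv_Rop[OF u1 oneS, of x 0] inv_Rop[OF u1 _ oneS, of x 0] aok[of x] that rpos by auto
  have inv0: "mm (G1 a 0) (F1 a 0) = II \<and> mm (F1 a 0) (G1 a 0) = II"
    unfolding F1_def G1_def
    using opprod_inv[of "rev a" "\<lambda>j. Rop R j 1 u" "\<lambda>j. Rop R 1 j u", OF h0] by simp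
  have A0: "nz (RIJ R S n [1] a u) = nz (F1 a 0)"
    unfolding RIJ_def F1_def by (simp add: nz_opprod_single)
  have A0i: "nz (opinv S n (RIJ R S n [1] a u)) = nz (G1 a 0)"
  proof (rule opinv_unique)
    show "mm (RIJ R S n [1] a u) (G1 a 0) = II"
      using inv0 A0 by (metis mm_nz_left)
    show "mm (G1 a 0) (RIJ R S n [1] a u) = II"
      using inv0 A0 by (metis mm_nz_right)
  qed
  define cj where "cj X = mm (mm (G1 a 0) X) (F1 a 0)" for X
  have cj_conj: "nz (conjop S n (RIJ R S n [1] a u) X) = cj (nz X)" for X
    unfolding nz_conjop A0 A0i cj_def by simp
  have cj_add: "cj (X + Y) = cj X + cj Y" for X Y
    unfolding cj_def by (simp add: mm_add_left mm_add_right)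
  have cj_nz: "cj (nz X) = cj X" for X unfolding cj_def by simp
  have "nz (opsub (Qk R S n k [1] (a @ [2..<k] @ b) u)
              (conjop S n (RIJ R S n [1] a u) (Qk R S n k [1] ([2..<k] @ b) u)))
      = Kt1 k a - cj (Kt1 k [])"
    unfolding nz_opsub cj_conj Qab Q0b cj_add
    by (simp add: cj_def[symmetric] cj_nz Zt1_def Kt1_def)
  moreover have "nz (opsub (Qk R S n k [1] (a @ [2..<k]) u)
              (conjop S n (RIJ R S n [1] a u) (Qk R S n k [1] [2..<k] u)))
      = Kt1 k a - cj (Kt1 k [])"
    unfolding nz_opsub cj_conj Qa0 Q00 cj_add
    by (simp add: cj_def[symmetric] cj_nz Zt1_def Kt1_def)
  ultimately show ?thesis unfolding op_eq_nz by simp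
qed


lemma mm_uminus_l: "mm (- A) B = - mm A B"
  by (simp add: mm_def nz_def opmul_def fun_eq_iff sum_negf)
lemma mm_uminus_r: "mm A (- B) = - mm A B"
  by (simp add: mm_def nz_def opmul_def fun_eq_iff sum_negf)

lemma final2:
  assumes k: "2 \<le> k" and S1k: "{1..k} \<subseteq> S" and u0: "\<And>i. i \<in> {1..k} \<Longrightarrow> u i = 0"
    and aS: "set a \<subseteq> S" and bS: "set b \<subseteq> S" and dist: "distinct (a @ b)"
    and disj: "set (a @ b) \<inter> {1..k} = {}"
  shows "op_eq S n
       (opsub (Qtk R S n k (a @ [1..<k] @ b) [k] u)
              (conjop S n (RIJ R S n b [k] u) (Qtk R S n k (a @ [1..<k]) [k] u)))
       (opsub (Qtk R S n k ([1..<k] @ b) [k] u)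
              (conjop S n (RIJ R S n b [k] u) (Qtk R S n k [1..<k] [k] u)))"
proof -
  have da: "distinct a" and db: "distinct b" and ab: "set a \<inter> set b = {}" using dist by auto
  have a1k: "set a \<inter> {1..k} = {}" and b1k: "set b \<inter> {1..k} = {}" using disj by auto
  have nS: "set [] \<subseteq> S" "distinct []" "set [] \<inter> {1..k} = {}" "set [] \<inter> X = {}" "X \<inter> set [] = {}" for X :: "nat set" by auto
  have Qab: "nz (Qtk R S n k (a @ [1..<k] @ b) [k] u) = - (mm (mm (G2 k b 0) (Zt2 k a)) (F2 k b 0) + Kt2 k b)"
    by (rule eq2_J[OF k S1k u0 aS bS da db a1k b1k ab])
  have Qa0: "nz (Qtk R S n k (a @ [1..<k]) [k] u) = - (Zt2 k a + Kt2 k [])"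
    using eq2_J[OF k S1k u0 aS nS(1) da nS(2) a1k nS(3) nS(5)] by (simp add: G2_Nil F2_Nil Zt2_def)
  have Q0b: "nz (Qtk R S n k ([1..<k] @ b) [k] u) = - (mm (mm (G2 k b 0) (Zt2 k [])) (F2 k b 0) + Kt2 k b)"
    using eq2_J[OF k S1k u0 nS(1) bS nS(2) db nS(3) b1k nS(4)] by simp
  have Q00: "nz (Qtk R S n k [1..<k] [k] u) = - (Zt2 k [] + Kt2 k [])"
    using eq2_J[OF k S1k u0 nS(1) nS(1) nS(2) nS(2) nS(3) nS(3) nS(4)] by (simp add: G2_Nil F2_Nil Zt2_def)
  have kS: "k \<in> S" using S1k k by auto
  have uk: "u k = 0" using u0 k by auto
  have bok: "j \<in> S" "j \<noteq> k" if "j \<in> set b" for j using that bS b1k k by auto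
  have h0: "mm (Rop R k x u) (Rop R x k u) = II \<and> mm (Rop R x k u) (Rop R k x u) = II"
    if "x \<in> set b" for x
    using inv_Rop[OF uk kS, of x 0] inv_Rop[OF uk _ kS, of x 0] bok[of x] that rpos by auto
  have inv0: "mm (G2 k b 0) (F2 k b 0) = II \<and> mm (F2 k b 0) (G2 k b 0) = II"
    unfolding F2_def G2_def
    using opprod_inv[of b "\<lambda>j. Rop R k j u" "\<lambda>j. Rop R j k u", OF h0] by simp
  have A0: "nz (RIJ R S n b [k] u) = nz (F2 k b 0)"
    unfolding RIJ_def F2_def shift_0 by (rule nz_opprod_cong) (simp add: nz_opprod_single)
  have A0i: "nz (opinv S n (RIJ R S n b [k] u)) = nz (G2 k b 0)"
  proof (rule opinv_unique)
    show "mm (RIJ R S n b [k] u) (G2 k b 0) = II"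
      using inv0 A0 by (metis mm_nz_left)
    show "mm (G2 k b 0) (RIJ R S n b [k] u) = II"
      using inv0 A0 by (metis mm_nz_right)
  qed
  define cj where "cj X = mm (mm (G2 k b 0) X) (F2 k b 0)" for X
  have cj_conj: "nz (conjop S n (RIJ R S n b [k] u) X) = cj (nz X)" for X
    unfolding nz_conjop A0 A0i cj_def by simp
  have cj_add: "cj (X + Y) = cj X + cj Y" for X Y
    unfolding cj_def by (simp add: mm_add_left mm_add_right)
  have cj_neg: "cj (- X) = - cj X" for X
    unfolding cj_def by (simp add: mm_uminus_l mm_uminus_r)
  have cj_nz: "cj (nz X) = cj X" for X unfolding cj_def by simp
  have "nz (opsub (Qtk R S n k (a @ [1..<k] @ b) [k] u)
              (conjop S n (RIJ R S n b [k] u) (Qtk R S n k (a @ [1..<k]) [k] u)))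
      = - Kt2 k b + cj (Kt2 k [])"
    unfolding nz_opsub cj_conj Qab Qa0 cj_neg cj_add
    by (simp add: cj_def[symmetric] cj_nz Zt2_def Kt2_def)
  moreover have "nz (opsub (Qtk R S n k ([1..<k] @ b) [k] u)
              (conjop S n (RIJ R S n b [k] u) (Qtk R S n k [1..<k] [k] u)))
      = - Kt2 k b + cj (Kt2 k [])"
    unfolding nz_opsub cj_conj Q0b Q00 cj_neg cj_add
    by (simp add: cj_def[symmetric] cj_nz Zt2_def Kt2_def)
  ultimately show ?thesis unfolding op_eq_nz by simp
qed

end

theorem mainTheorem2:
  fixes n :: nat and r :: real
    and R :: "complex \<Rightarrow> complex \<Rightarrow> nat \<times> nat \<Rightarrow> nat \<times> nat \<Rightarrow> complex"
    and k :: nat and a b :: "nat list"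
  assumes analytic: "analytic_R n r R"
    and YBE: "\<forall>w. (\<forall>i\<in>{1,2,3}. norm (w i) < r) \<longrightarrow>
      op_eq {1,2,3} n
        (opmul {1,2,3} n (opmul {1,2,3} n (Rop R 1 2 w) (Rop R 1 3 w)) (Rop R 2 3 w))
        (opmul {1,2,3} n (opmul {1,2,3} n (Rop R 2 3 w) (Rop R 1 3 w)) (Rop R 1 2 w))"
    and regular: "\<forall>u. norm u < r \<longrightarrow> (\<forall>p q. fst p < n \<longrightarrow> snd p < n \<longrightarrow> fst q < n \<longrightarrow> snd q < n \<longrightarrow>
      R u u p q = (if fst p = snd q \<and> snd p = fst q then 1 else 0))"
    and unitary: "\<forall>w. (\<forall>i\<in>{1,2}. norm (w i) < r) \<longrightarrow>
      op_eq {1,2} n (opmul {1,2} n (Rop R 1 2 w) (Rop R 2 1 w)) opid"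
    and k2: "2 \<le> k"
    and dist: "distinct (a @ b)"
    and disj: "set (a @ b) \<inter> {1..k} = {}"
  shows "\<forall>u. (\<forall>i\<in>{1..k}. u i = 0) \<and> (\<forall>i\<in>set (a @ b). norm (u i) < r) \<longrightarrow>
     op_eq ({1..k} \<union> set a \<union> set b) n
       (opsub (Qk R ({1..k} \<union> set a \<union> set b) n k [1] (a @ [2..<k] @ b) u)
              (conjop ({1..k} \<union> set a \<union> set b) n (RIJ R ({1..k} \<union> set a \<union> set b) n [1] a u)
                 (Qk R ({1..k} \<union> set a \<union> set b) n k [1] ([2..<k] @ b) u)))
       (opsub (Qk R ({1..k} \<union> set a \<union> set b) n k [1] (a @ [2..<k]) u)
              (conjop ({1..k} \<union> set a \<union> set b) n (RIJ R ({1..k} \<union> set a \<union> set b) n [1] a u)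
                 (Qk R ({1..k} \<union> set a \<union> set b) n k [1] [2..<k] u)))
   \<and> op_eq ({1..k} \<union> set a \<union> set b) n
       (opsub (Qtk R ({1..k} \<union> set a \<union> set b) n k (a @ [1..<k] @ b) [k] u)
              (conjop ({1..k} \<union> set a \<union> set b) n (RIJ R ({1..k} \<union> set a \<union> set b) n b [k] u)
                 (Qtk R ({1..k} \<union> set a \<union> set b) n k (a @ [1..<k]) [k] u)))
       (opsub (Qtk R ({1..k} \<union> set a \<union> set b) n k ([1..<k] @ b) [k] u)
              (conjop ({1..k} \<union> set a \<union> set b) n (RIJ R ({1..k} \<union> set a \<union> set b) n b [k] u)
                 (Qtk R ({1..k} \<union> set a \<union> set b) n k [1..<k] [k] u)))"
  proof -
  let ?S = "{1..k} \<union> set a \<union> set b"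
  have rpos: "0 < r" using analytic by (simp add: analytic_R_def)
  have finS: "finite ?S" by simp
  have S1k: "{1..k} \<subseteq> ?S" by auto
  show ?thesis
  proof (intro allI impI)
    fix u :: "nat \<Rightarrow> complex"
    assume hu: "(\<forall>i\<in>{1..k}. u i = 0) \<and> (\<forall>i\<in>set (a @ b). norm (u i) < r)"
    show "op_eq ?S n
       (opsub (Qk R ?S n k [1] (a @ [2..<k] @ b) u)
              (conjop ?S n (RIJ R ?S n [1] a u) (Qk R ?S n k [1] ([2..<k] @ b) u)))
       (opsub (Qk R ?S n k [1] (a @ [2..<k]) u)
              (conjop ?S n (RIJ R ?S n [1] a u) (Qk R ?S n k [1] [2..<k] u)))
     \<and> op_eq ?S n
       (opsub (Qtk R ?S n k (a @ [1..<k] @ b) [k] u)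
              (conjop ?S n (RIJ R ?S n b [k] u) (Qtk R ?S n k (a @ [1..<k]) [k] u)))
       (opsub (Qtk R ?S n k ([1..<k] @ b) [k] u)
              (conjop ?S n (RIJ R ?S n b [k] u) (Qtk R ?S n k [1..<k] [k] u)))"
    proof (cases "n = 0")
      case True
      have "cfgs ?S n = {}" using True k2 by (auto simp: cfgs_def)
      then show ?thesis by (simp add: op_eq_def)
    next
      case False
      then have npos: "0 < n" by simp
      have U2: "(\<Sum>c<n. \<Sum>e<n. R v w (a1, b1) (c, e) * R w v (e, c) (b1', a1')) = (if a1 = a1' \<and> b1 = b1' then 1 else 0)"
        if v: "norm v < r" and w: "norm w < r" and lt: "a1 < n" "b1 < n" "a1' < n" "b1' < n"
        for v w a1 b1 a1' b1'
      proof -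
        interpret o2: ops "{1, 2::nat}" n by unfold_locales (auto simp: npos)
        define W where "W = (\<lambda>l::nat. if l = 1 then v else w)"
        define x where "x = (\<lambda>l::nat. if l = 1 then a1 else if l = 2 then b1 else 0)"
        define y where "y = (\<lambda>l::nat. if l = 1 then a1' else if l = 2 then b1' else 0)"
        have x: "x \<in> cfgs {1, 2} n" and y: "y \<in> cfgs {1, 2} n" using lt by (auto simp: x_def y_def cfgs_def)
        have "\<forall>i\<in>{1, 2}. norm (W i) < r" using v w by (auto simp: W_def)
        then have "op_eq {1, 2} n (opmul {1, 2} n (Rop R 1 2 W) (Rop R 2 1 W)) opid"
          using unitary by blast
        then have "opmul {1, 2} n (Rop R 1 2 W) (Rop R 2 1 W) x y = opid x y"
          using x y unfolding op_eq_def by blast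
        moreover have "opmul {1, 2} n (Rop R 1 2 W) (Rop R 2 1 W) x y =
          (\<Sum>c<n. \<Sum>e<n. R v w (a1, b1) (c, e) * R w v (e, c) (b1', a1'))"
          using o2.Rop_prod[of 1 2 x R W y] x by (simp add: x_def y_def W_def)
        moreover have "opid x y = (if a1 = a1' \<and> b1 = b1' then 1 else 0)"
          by (auto simp: opid_def x_def y_def fun_eq_iff)
        ultimately show ?thesis by simp
      qed
      interpret C: conc ?S n r R u
      proof unfold_locales
        show "finite ?S" by simp
        show "0 < n" by (rule npos)
        show "analytic_R n r R" by (rule analytic)
        show "R 0 0 p q = (if fst p = snd q \<and> snd p = fst q then 1 else 0)"
          if "fst p < n" "snd p < n" "fst q < n" "snd q < n" for p q
        proof -
          obtain p1 p2 q1 q2 where pq: "p = (p1, p2)" "q = (q1, q2)" by (cases p, cases q) auto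
          have "norm (0::complex) < r" using rpos by simp
          then show ?thesis using regular that unfolding pq by simp
        qed
        show "(\<Sum>c<n. \<Sum>e<n. R v w (a1, b1) (c, e) * R w v (e, c) (b1', a1')) = (if a1 = a1' \<and> b1 = b1' then 1 else 0)"
          if "norm v < r" "norm w < r" "a1 < n" "b1 < n" "a1' < n" "b1' < n" for v w a1 b1 a1' b1'
          using U2 that by blast
        show "norm (u l) < r" if "l \<in> ?S" for l
          using that hu rpos by auto
      qed
      have u0: "\<And>i. i \<in> {1..k} \<Longrightarrow> u i = 0" using hu by auto
      have aS: "set a \<subseteq> ?S" and bS: "set b \<subseteq> ?S" by auto
      show ?thesis
        using C.final1[OF k2 S1k u0 aS bS dist disj] C.final2[OF k2 S1k u0 aS bS dist disj] by simp
    qed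
  qed
qed

end
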